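(* Let $G$ be an elementary abelian $2$-group (an $\mathbb{F}_2$-vector space) and let $T\subseteq G$ be a generating subset of $G$ with $0\in T$. Let $\mathcal{U}$ be the group with presentation $$\mathcal{U}=\big\langle (t^{\mathcal U})_{t\in T}\;\big|\;(t^{\mathcal U})^2=1,\ t^{\mathcal U}s^{\mathcal U}(t^{\mathcal U})^{-1}=(2t-s)^{\mathcal U}\text{ for all } s,t\in T\big\rangle,$$ let $\mathcal{W}$ be the subgroup generated by $\{(0,t,-1)\mid t\in T\}$ of the group $(G\wedge G)\times G\times\{1,-1\}$ with multiplication $(l,g,v)(l',g',v')=(l+l'+g\wedge(vg'),\,g+vg',\,vv')$, and let $\phi:\mathcal U\to\mathcal W$ be the group homomorphism determined by $t^{\mathcal U}\mapsto(0,t,-1)$. Then: (1) $\phi$ is injective if $T\setminus\{0\}$ is a basis of $G$; (2) if $G$ has finite dimension $n$ over $\mathbb{F}_2$ and $|T\setminus\{0\}|>\frac{n(n+1)}{2}$, then $\phi$ is not injective; (3) if $T=G$, then $\phi$ is an isomorphism if and only if $\dim_{\mathbb{F}_2}(G)\le 2$.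
   Context: Since $2s=0$ in $G$, the relation in $\mathcal U$ reads $t^{\mathcal U}s^{\mathcal U}(t^{\mathcal U})^{-1}=s^{\mathcal U}$. The homomorphism $\phi$ exists since the elements $(0,t,-1)$ satisfy the defining relations of $\mathcal U$, and it is surjective by construction. *)

theory Defs
  imports "HOL-Algebra.Algebra" "HOL-Algebra.Free_Abelian_Groups"
begin

text \<open>G is an HOL-Algebra group written multiplicatively: the paper's 0 is the unit,
  the paper's + is the group product.\<close>

definition elem_abelian_2group :: "('g, 'b) monoid_scheme \<Rightarrow> bool" where
  "elem_abelian_2group G \<longleftrightarrow> comm_group G \<and> (\<forall>x\<in>carrier G. x \<otimes>\<^bsub>G\<^esub> x = \<one>\<^bsub>G\<^esub>)"

definition f2_independent :: "('g, 'b) monoid_scheme \<Rightarrow> 'g set \<Rightarrow> bool" where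
  "f2_independent G B \<longleftrightarrow> B \<subseteq> carrier G \<and>
     (\<forall>S. finite S \<and> S \<subseteq> B \<and> S \<noteq> {} \<longrightarrow> finprod G (\<lambda>x. x) S \<noteq> \<one>\<^bsub>G\<^esub>)"

definition f2_basis :: "('g, 'b) monoid_scheme \<Rightarrow> 'g set \<Rightarrow> bool" where
  "f2_basis G B \<longleftrightarrow> f2_independent G B \<and> generate G B = carrier G"

definition f2_dim :: "('g, 'b) monoid_scheme \<Rightarrow> nat \<Rightarrow> bool" where
  "f2_dim G n \<longleftrightarrow> (\<exists>B. f2_basis G B \<and> finite B \<and> card B = n)"

definition wedge_free :: "('g, 'b) monoid_scheme \<Rightarrow> ('g \<times> 'g \<Rightarrow>\<^sub>0 int) monoid" where
  "wedge_free G = free_Abelian_group (carrier G \<times> carrier G)"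

definition wedge_relators :: "('g, 'b) monoid_scheme \<Rightarrow> ('g \<times> 'g \<Rightarrow>\<^sub>0 int) set" where
  "wedge_relators G =
     {frag_of (a \<otimes>\<^bsub>G\<^esub> b, c) - frag_of (a, c) - frag_of (b, c) | a b c.
        a \<in> carrier G \<and> b \<in> carrier G \<and> c \<in> carrier G}
   \<union> {frag_of (a, b \<otimes>\<^bsub>G\<^esub> c) - frag_of (a, b) - frag_of (a, c) | a b c.
        a \<in> carrier G \<and> b \<in> carrier G \<and> c \<in> carrier G}
   \<union> {frag_of (a, a) | a. a \<in> carrier G}"

definition ext_square :: "('g, 'b) monoid_scheme \<Rightarrow> ('g \<times> 'g \<Rightarrow>\<^sub>0 int) set monoid" where
  "ext_square G = wedge_free G Mod generate (wedge_free G) (wedge_relators G)"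

definition wedge :: "('g, 'b) monoid_scheme \<Rightarrow> 'g \<Rightarrow> 'g \<Rightarrow> ('g \<times> 'g \<Rightarrow>\<^sub>0 int) set" where
  "wedge G a b = generate (wedge_free G) (wedge_relators G) #>\<^bsub>wedge_free G\<^esub> frag_of (a, b)"

definition sgn_act :: "('g, 'b) monoid_scheme \<Rightarrow> int \<Rightarrow> 'g \<Rightarrow> 'g" where
  "sgn_act G v g = (if v = 1 then g else inv\<^bsub>G\<^esub> g)"

definition big_mult :: "('g, 'b) monoid_scheme \<Rightarrow>
    ('g \<times> 'g \<Rightarrow>\<^sub>0 int) set \<times> 'g \<times> int \<Rightarrow>
    ('g \<times> 'g \<Rightarrow>\<^sub>0 int) set \<times> 'g \<times> int \<Rightarrow>
    ('g \<times> 'g \<Rightarrow>\<^sub>0 int) set \<times> 'g \<times> int" where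
  "big_mult G x y = (case x of (l, g, v) \<Rightarrow> case y of (l', g', v') \<Rightarrow>
        (l \<otimes>\<^bsub>ext_square G\<^esub> l' \<otimes>\<^bsub>ext_square G\<^esub> wedge G g (sgn_act G v g'),
         g \<otimes>\<^bsub>G\<^esub> sgn_act G v g', v * v'))"

definition big_group ::
  "('g, 'b) monoid_scheme \<Rightarrow> (('g \<times> 'g \<Rightarrow>\<^sub>0 int) set \<times> 'g \<times> int) monoid" where
  "big_group G = \<lparr>carrier = carrier (ext_square G) \<times> carrier G \<times> {1, -1},
     monoid.mult = big_mult G,
     one = (\<one>\<^bsub>ext_square G\<^esub>, \<one>\<^bsub>G\<^esub>, 1)\<rparr>"

definition W_gen :: "('g, 'b) monoid_scheme \<Rightarrow> 'g \<Rightarrow> ('g \<times> 'g \<Rightarrow>\<^sub>0 int) set \<times> 'g \<times> int" where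
  "W_gen G t = (\<one>\<^bsub>ext_square G\<^esub>, t, -1)"

definition W_group ::
  "('g, 'b) monoid_scheme \<Rightarrow> 'g set \<Rightarrow> (('g \<times> 'g \<Rightarrow>\<^sub>0 int) set \<times> 'g \<times> int) monoid" where
  "W_group G T = subgroup_generated (big_group G) (W_gen G ` T)"

text \<open>Words: lists of letters (x, b); b = True means the formal inverse of x.
  pres_eq R is the congruence on words generated by free cancellation and
  deletion/insertion of relators from R.\<close>

inductive pres_eq :: "('a \<times> bool) list set \<Rightarrow> ('a \<times> bool) list \<Rightarrow> ('a \<times> bool) list \<Rightarrow> bool"
  for R where
  refl: "pres_eq R w w"
| sym: "pres_eq R w w' \<Longrightarrow> pres_eq R w' w"
| trans: "pres_eq R u v \<Longrightarrow> pres_eq R v w \<Longrightarrow> pres_eq R u w"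
| cancel: "pres_eq R (u @ [(x, b), (x, \<not> b)] @ v) (u @ v)"
| relator: "r \<in> R \<Longrightarrow> pres_eq R (u @ r @ v) (u @ v)"

definition word_class :: "'a set \<Rightarrow> ('a \<times> bool) list set \<Rightarrow> ('a \<times> bool) list \<Rightarrow> ('a \<times> bool) list set" where
  "word_class Xs Rs w = {w'. set w' \<subseteq> Xs \<times> (UNIV::bool set) \<and> pres_eq Rs w w'}"

definition presented_group :: "'a set \<Rightarrow> ('a \<times> bool) list set \<Rightarrow> ('a \<times> bool) list set monoid" where
  "presented_group Xs R = \<lparr>carrier = word_class Xs R ` {w. set w \<subseteq> Xs \<times> UNIV},
     monoid.mult = (\<lambda>A B. word_class Xs R ((SOME a. a \<in> A) @ (SOME b. b \<in> B))),
     one = word_class Xs R []\<rparr>"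

definition eval_word :: "('c, 'd) monoid_scheme \<Rightarrow> ('a \<Rightarrow> 'c) \<Rightarrow> ('a \<times> bool) list \<Rightarrow> 'c" where
  "eval_word H f w = foldr (\<lambda>(x, b) acc. (if b then inv\<^bsub>H\<^esub> (f x) else f x) \<otimes>\<^bsub>H\<^esub> acc) w \<one>\<^bsub>H\<^esub>"

definition induced_hom :: "('c, 'd) monoid_scheme \<Rightarrow> ('a \<Rightarrow> 'c) \<Rightarrow> ('a \<times> bool) list set \<Rightarrow> 'c" where
  "induced_hom H f A = eval_word H f (SOME w. w \<in> A)"

text \<open>Relators (t^U)^2 and t^U s^U (t^U)^{-1} ((2t-s)^U)^{-1}, where 2t - s is t + t - s.\<close>
definition U_relators :: "('g, 'b) monoid_scheme \<Rightarrow> 'g set \<Rightarrow> ('g \<times> bool) list set" where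
  "U_relators G T = {[(t, False), (t, False)] | t. t \<in> T}
     \<union> {[(t, False), (s, False), (t, True), (t \<otimes>\<^bsub>G\<^esub> t \<otimes>\<^bsub>G\<^esub> inv\<^bsub>G\<^esub> s, True)] | t s. t \<in> T \<and> s \<in> T}"

definition U_group :: "('g, 'b) monoid_scheme \<Rightarrow> 'g set \<Rightarrow> ('g \<times> bool) list set monoid" where
  "U_group G T = presented_group T (U_relators G T)"

definition phi_map :: "('g, 'b) monoid_scheme \<Rightarrow> 'g set \<Rightarrow> ('g \<times> bool) list set \<Rightarrow> ('g \<times> 'g \<Rightarrow>\<^sub>0 int) set \<times> 'g \<times> int" where
  "phi_map G T = induced_hom (W_group G T) (W_gen G)"

end

theory Submission imports Defs begin

locale ea2 =
  fixes G :: "('g, 'b) monoid_scheme" (structure)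
  assumes ea: "elem_abelian_2group G"
begin

lemma cg: "comm_group G" using ea by (simp add: elem_abelian_2group_def)
sublocale comm_group G by (rule cg)

lemma sq[simp]: "x \<in> carrier G \<Longrightarrow> x \<otimes> x = \<one>"
  using ea by (simp add: elem_abelian_2group_def)

lemma sq2[simp]: "x \<in> carrier G \<Longrightarrow> y \<in> carrier G \<Longrightarrow> x \<otimes> (x \<otimes> y) = y"
  by (simp flip: m_assoc)

lemma inv_self[simp]: "x \<in> carrier G \<Longrightarrow> inv x = x"
  by (rule inv_equality) auto

lemma sgn_act_id[simp]: "g \<in> carrier G \<Longrightarrow> sgn_act G v g = g"
  by (simp add: sgn_act_def)

abbreviation "F \<equiv> wedge_free G"
abbreviation "HH \<equiv> generate F (wedge_relators G)"
definition cl :: "('g \<times> 'g \<Rightarrow>\<^sub>0 int) \<Rightarrow> ('g \<times> 'g \<Rightarrow>\<^sub>0 int) set" where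
  "cl c = HH #>\<^bsub>F\<^esub> c"

lemma F_group: "comm_group F" by (simp add: wedge_free_def abelian_free_Abelian_group)
lemma F_grp: "group F" by (simp add: wedge_free_def)

lemma carrF: "c \<in> carrier F \<longleftrightarrow> Poly_Mapping.keys c \<subseteq> carrier G \<times> carrier G"
  by (simp add: wedge_free_def)
lemma multF[simp]: "c \<otimes>\<^bsub>F\<^esub> d = c + d" by (simp add: wedge_free_def)
lemma oneF[simp]: "\<one>\<^bsub>F\<^esub> = 0" by (simp add: wedge_free_def)
lemma invF[simp]: "c \<in> carrier F \<Longrightarrow> inv\<^bsub>F\<^esub> c = - c" by (simp add: wedge_free_def)

lemma frag_carr[simp]: "a \<in> carrier G \<Longrightarrow> b \<in> carrier G \<Longrightarrow> frag_of (a,b) \<in> carrier F"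
  by (simp add: carrF)

lemma add_carr[simp]: "c \<in> carrier F \<Longrightarrow> d \<in> carrier F \<Longrightarrow> c + d \<in> carrier F"
  using keys_add[of c d] by (auto simp: carrF)
lemma minus_carr[simp]: "c \<in> carrier F \<Longrightarrow> - c \<in> carrier F"
  by (simp add: carrF)
lemma diff_carr[simp]: "c \<in> carrier F \<Longrightarrow> d \<in> carrier F \<Longrightarrow> c - d \<in> carrier F"
  using keys_diff[of c d] by (auto simp: carrF)
lemma zero_carr[simp]: "0 \<in> carrier F"
  by (simp add: carrF)

lemma rel_sub: "wedge_relators G \<subseteq> carrier F"
  unfolding wedge_relators_def by (blast intro: diff_carr frag_carr m_closed)

lemma HH_sub: "subgroup HH F"
  by (rule group.generate_is_subgroup[OF F_grp rel_sub])

lemma HH_normal: "normal HH F"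
  using comm_group.subgroup_imp_normal[OF F_group HH_sub] .

lemma HH_carr: "c \<in> HH \<Longrightarrow> c \<in> carrier F"
  by (rule subgroup.mem_carrier[OF HH_sub])

lemma HH_add: "c \<in> HH \<Longrightarrow> d \<in> HH \<Longrightarrow> c + d \<in> HH"
  by (metis multF generate.eng)
lemma HH_minus: "c \<in> HH \<Longrightarrow> - c \<in> HH"
  by (metis HH_carr HH_sub invF subgroup.m_inv_closed)
lemma HH_diff: "c \<in> HH \<Longrightarrow> d \<in> HH \<Longrightarrow> c - d \<in> HH"
  by (metis HH_add HH_minus diff_conv_add_uminus)
lemma HH_zero: "0 \<in> HH"
  by (metis oneF generate.one)

lemma rel1: "a \<in> carrier G \<Longrightarrow> b \<in> carrier G \<Longrightarrow> c \<in> carrier G \<Longrightarrow>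
   frag_of (a \<otimes> b, c) - frag_of (a, c) - frag_of (b, c) \<in> HH"
  by (rule generate.incl) (unfold wedge_relators_def, blast)
lemma rel2: "a \<in> carrier G \<Longrightarrow> b \<in> carrier G \<Longrightarrow> c \<in> carrier G \<Longrightarrow>
   frag_of (a, b \<otimes> c) - frag_of (a, b) - frag_of (a, c) \<in> HH"
  by (rule generate.incl) (unfold wedge_relators_def, blast)
lemma rel3: "a \<in> carrier G \<Longrightarrow> frag_of (a, a) \<in> HH"
  by (rule generate.incl) (unfold wedge_relators_def, blast)

lemma rel_one_l: "b \<in> carrier G \<Longrightarrow> frag_of (\<one>, b) \<in> HH"
proof -
  assume b: "b \<in> carrier G"
  have "frag_of (\<one> \<otimes> \<one>, b) - frag_of (\<one>, b) - frag_of (\<one>, b) \<in> HH" using rel1[of "\<one>" "\<one>" b] b by simp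
  hence "- frag_of (\<one>, b) \<in> HH" by simp
  thus ?thesis using HH_minus by (metis minus_minus)
qed
lemma rel_one_r: "b \<in> carrier G \<Longrightarrow> frag_of (b, \<one>) \<in> HH"
proof -
  assume b: "b \<in> carrier G"
  have "frag_of (b, \<one> \<otimes> \<one>) - frag_of (b, \<one>) - frag_of (b, \<one>) \<in> HH" using rel2[of b "\<one>" "\<one>"] b by simp
  hence "- frag_of (b, \<one>) \<in> HH" by simp
  thus ?thesis using HH_minus by (metis minus_minus)
qed

lemma rel_symm: assumes a: "a \<in> carrier G" and b: "b \<in> carrier G"
  shows "frag_of (a, b) - frag_of (b, a) \<in> HH"
proof -
  have 1: "frag_of (a \<otimes> b, a \<otimes> b) \<in> HH" using a b rel3 by simp
  have 2: "frag_of (a \<otimes> b, a \<otimes> b) - frag_of (a, a \<otimes> b) - frag_of (b, a \<otimes> b) \<in> HH" using a b rel1 by simp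
  have 3: "frag_of (a, a \<otimes> b) - frag_of (a, a) - frag_of (a, b) \<in> HH" using a b rel2 by simp
  have 4: "frag_of (b, a \<otimes> b) - frag_of (b, a) - frag_of (b, b) \<in> HH" using a b rel2 by simp
  have 5: "frag_of (a, a) \<in> HH" "frag_of (b, b) \<in> HH" using a b rel3 by auto
  have 6: "frag_of (b, a \<otimes> a) - frag_of (b, a) - frag_of (b, a) \<in> HH" using a b rel2[of b a a] by simp
  have 7: "frag_of (b, a \<otimes> a) \<in> HH" using a b rel_one_r by simp
  have e: "frag_of (a, b) - frag_of (b, a) =
    ((((frag_of (a \<otimes> b, a \<otimes> b) - (frag_of (a \<otimes> b, a \<otimes> b) - frag_of (a, a \<otimes> b) - frag_of (b, a \<otimes> b)))
      - (frag_of (a, a \<otimes> b) - frag_of (a, a) - frag_of (a, b)))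
      - (frag_of (b, a \<otimes> b) - frag_of (b, a) - frag_of (b, b))) - frag_of (a, a) - frag_of (b, b))
    - (frag_of (b, a \<otimes> a) - (frag_of (b, a \<otimes> a) - frag_of (b, a) - frag_of (b, a)))"
    by (simp add: algebra_simps)
  show ?thesis unfolding e
    by (rule HH_diff[OF HH_diff[OF HH_diff[OF HH_diff[OF HH_diff[OF HH_diff[OF 1 2] 3] 4] 5(1)] 5(2)] HH_diff[OF 7 6]])
qed

abbreviation "E \<equiv> ext_square G"

lemma carrE: "carrier E = cl ` carrier F"
  by (simp add: ext_square_def carrier_FactGroup cl_def)

lemma cl_carr[simp]: "c \<in> carrier F \<Longrightarrow> cl c \<in> carrier E"
  by (simp add: carrE)

lemma cl_mult: "c \<in> carrier F \<Longrightarrow> d \<in> carrier F \<Longrightarrow> cl c \<otimes>\<^bsub>E\<^esub> cl d = cl (c + d)"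
  unfolding cl_def ext_square_def using normal.rcos_sum[OF HH_normal] by simp

lemma cl_zero: "cl 0 = \<one>\<^bsub>E\<^esub>"
  unfolding cl_def ext_square_def
  using group.coset_mult_one[OF F_grp] HH_sub subgroup.subset by (metis oneF one_FactGroup)

lemma cl_eq: assumes "c \<in> carrier F" "d \<in> carrier F"
  shows "cl c = cl d \<longleftrightarrow> c - d \<in> HH"
proof
  assume "cl c = cl d"
  hence "c \<in> HH #>\<^bsub>F\<^esub> d" unfolding cl_def
    using group.repr_independenceD[OF F_grp HH_sub assms(1)] by simp
  hence "c \<otimes>\<^bsub>F\<^esub> inv\<^bsub>F\<^esub> d \<in> HH"
    using subgroup.rcos_module_imp[OF HH_sub F_grp assms(2)] by blast
  thus "c - d \<in> HH" using assms by simp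
next
  assume "c - d \<in> HH"
  hence "c \<otimes>\<^bsub>F\<^esub> inv\<^bsub>F\<^esub> d \<in> HH" using assms by simp
  hence "c \<in> HH #>\<^bsub>F\<^esub> d"
    using subgroup.rcos_module_rev[OF HH_sub F_grp assms(2) assms(1)] by blast
  thus "cl c = cl d" unfolding cl_def
    using group.repr_independence[OF F_grp _ assms(2) HH_sub] by simp
qed

lemma cl_eq_zero: "c \<in> carrier F \<Longrightarrow> cl c = \<one>\<^bsub>E\<^esub> \<longleftrightarrow> c \<in> HH"
  using cl_eq[of c 0] by (simp flip: cl_zero)

lemma wedge_cl: "wedge G a b = cl (frag_of (a, b))"
  by (simp add: wedge_def cl_def)

abbreviation "BG \<equiv> big_group G"

lemma carrBG: "x \<in> carrier BG \<longleftrightarrow> (\<exists>c g v. x = (cl c, g, v) \<and> c \<in> carrier F \<and> g \<in> carrier G \<and> (v = 1 \<or> v = -1))"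
  by (auto simp: big_group_def carrE)

lemma cl_BG[simp]: "c \<in> carrier F \<Longrightarrow> g \<in> carrier G \<Longrightarrow> v = 1 \<or> v = -1 \<Longrightarrow> (cl c, g, v) \<in> carrier BG"
  using carrBG by blast

lemma BG_mult: "c \<in> carrier F \<Longrightarrow> c' \<in> carrier F \<Longrightarrow> g \<in> carrier G \<Longrightarrow> g' \<in> carrier G \<Longrightarrow>
   (cl c, g, v) \<otimes>\<^bsub>BG\<^esub> (cl c', g', v') = (cl (c + c' + frag_of (g, g')), g \<otimes> g', v * v')"
  by (simp add: big_group_def big_mult_def wedge_cl cl_mult)

lemma BG_one: "\<one>\<^bsub>BG\<^esub> = (cl 0, \<one>, 1)"
  by (simp add: big_group_def cl_zero)

lemma BG_group: "group BG"
proof (rule groupI)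
  fix x y assume "x \<in> carrier BG" "y \<in> carrier BG"
  then obtain c g v c' g' v' where x: "x = (cl c, g, v)" "c \<in> carrier F" "g \<in> carrier G" "v = 1 \<or> v = -1"
    and y: "y = (cl c', g', v')" "c' \<in> carrier F" "g' \<in> carrier G" "v' = 1 \<or> v' = -1"
    by (auto simp: carrBG)
  show "x \<otimes>\<^bsub>BG\<^esub> y \<in> carrier BG" using x y by (auto simp: BG_mult)
next
  show "\<one>\<^bsub>BG\<^esub> \<in> carrier BG" by (simp add: BG_one)
next
  fix x y z assume "x \<in> carrier BG" "y \<in> carrier BG" "z \<in> carrier BG"
  then obtain c g v c' g' v' c'' g'' v'' where x: "x = (cl c, g, v)" "c \<in> carrier F" "g \<in> carrier G"
    and y: "y = (cl c', g', v')" "c' \<in> carrier F" "g' \<in> carrier G"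
    and z: "z = (cl c'', g'', v'')" "c'' \<in> carrier F" "g'' \<in> carrier G"
    by (auto simp: carrBG)
  have "(frag_of (g \<otimes> g', g'') - frag_of (g, g'') - frag_of (g', g''))
     - (frag_of (g, g' \<otimes> g'') - frag_of (g, g') - frag_of (g, g'')) \<in> HH"
    using x y z by (intro HH_diff rel1 rel2) auto
  moreover have "(frag_of (g \<otimes> g', g'') - frag_of (g, g'') - frag_of (g', g''))
     - (frag_of (g, g' \<otimes> g'') - frag_of (g, g') - frag_of (g, g''))
     = (c + c' + frag_of (g, g') + c'' + frag_of (g \<otimes> g', g'')) - (c + (c' + c'' + frag_of (g', g'')) + frag_of (g, g' \<otimes> g''))"
    by (simp add: algebra_simps)
  ultimately have eqc: "cl (c + c' + frag_of (g, g') + c'' + frag_of (g \<otimes> g', g'')) = cl (c + (c' + c'' + frag_of (g', g'')) + frag_of (g, g' \<otimes> g''))"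
    using x y z by (subst cl_eq) auto
  thus "x \<otimes>\<^bsub>BG\<^esub> y \<otimes>\<^bsub>BG\<^esub> z = x \<otimes>\<^bsub>BG\<^esub> (y \<otimes>\<^bsub>BG\<^esub> z)"
  proof -
    have 1: "x \<otimes>\<^bsub>BG\<^esub> y \<otimes>\<^bsub>BG\<^esub> z = (cl (c + c' + frag_of (g, g') + c'' + frag_of (g \<otimes> g', g'')), g \<otimes> g' \<otimes> g'', v * v' * v'')"
      using x y z by (simp add: BG_mult)
    have 2: "x \<otimes>\<^bsub>BG\<^esub> (y \<otimes>\<^bsub>BG\<^esub> z) = (cl (c + (c' + c'' + frag_of (g', g'')) + frag_of (g, g' \<otimes> g'')), g \<otimes> (g' \<otimes> g''), v * (v' * v''))"
      using x y z by (simp add: BG_mult)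
    have 3: "g \<otimes> g' \<otimes> g'' = g \<otimes> (g' \<otimes> g'')" using x y z by (simp add: m_assoc)
    show ?thesis unfolding 1 2 3 eqc by (simp add: mult.assoc)
  qed
next
  fix x assume "x \<in> carrier BG"
  then obtain c g v where x: "x = (cl c, g, v)" "c \<in> carrier F" "g \<in> carrier G" "v = 1 \<or> v = -1"
    by (auto simp: carrBG)
  have "cl (0 + c + frag_of (\<one>, g)) = cl c"
    using x rel_one_l[of g] by (subst cl_eq) auto
  thus "\<one>\<^bsub>BG\<^esub> \<otimes>\<^bsub>BG\<^esub> x = x" using x by (simp add: BG_one BG_mult)
  have "cl (- c + c + frag_of (g, g)) = cl 0"
    using x rel3[of g] by (subst cl_eq) auto
  hence "(cl (- c), g, v) \<otimes>\<^bsub>BG\<^esub> x = \<one>\<^bsub>BG\<^esub>" using x by (auto simp: BG_one BG_mult)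
  moreover have "(cl (- c), g, v) \<in> carrier BG" using x by simp
  ultimately show "\<exists>y\<in>carrier BG. y \<otimes>\<^bsub>BG\<^esub> x = \<one>\<^bsub>BG\<^esub>" by blast
qed

end

lemma pres_eq_cong: "pres_eq R u v \<Longrightarrow> pres_eq R (p @ u @ q) (p @ v @ q)"
proof (induction rule: pres_eq.induct)
  case (refl w) then show ?case by (rule pres_eq.refl)
next
  case (sym w w') show ?case by (rule pres_eq.sym[OF sym.IH])
next
  case (trans u v w) show ?case by (rule pres_eq.trans[OF trans.IH(1) trans.IH(2)])
next
  case (cancel u x b v)
  show ?case using pres_eq.cancel[of R "p @ u" x b "v @ q"] by simp
next
  case (relator r u v)
  show ?case using pres_eq.relator[OF relator, of "p @ u" "v @ q"] by simp
qed

lemma pres_eq_cong2: "pres_eq R u v \<Longrightarrow> pres_eq R u' v' \<Longrightarrow> pres_eq R (u @ u') (v @ v')"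
proof -
  assume a: "pres_eq R u v" "pres_eq R u' v'"
  have 1: "pres_eq R (u @ u') (v @ u')" using pres_eq_cong[OF a(1), of "[]" u'] by simp
  have 2: "pres_eq R (v @ u') (v @ v')" using pres_eq_cong[OF a(2), of v "[]"] by simp
  show ?thesis by (rule pres_eq.trans[OF 1 2])
qed

definition cnt :: "'a \<Rightarrow> ('a \<times> bool) list \<Rightarrow> nat" where
  "cnt x w = length (filter (\<lambda>p. fst p = x) w)"

lemma cnt_append[simp]: "cnt x (u @ v) = cnt x u + cnt x v"
  by (simp add: cnt_def)
lemma cnt_Nil[simp]: "cnt x [] = 0" by (simp add: cnt_def)
lemma cnt_Cons[simp]: "cnt x (p # w) = (if fst p = x then Suc (cnt x w) else cnt x w)"
  by (simp add: cnt_def)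

lemma pres_eq_par:
  assumes ev: "\<And>r y. r \<in> R \<Longrightarrow> even (cnt y r)"
  shows "pres_eq R w w' \<Longrightarrow> even (cnt x w) = even (cnt x w')"
proof (induction rule: pres_eq.induct)
  case (refl w) show ?case by simp
next
  case (sym w w') then show ?case by simp
next
  case (trans u v w) then show ?case by simp
next
  case (cancel u y b v) show ?case by simp
next
  case (relator r u v) then show ?case using ev[of r x] by simp
qed

definition norm :: "('a \<times> bool) list \<Rightarrow> ('a \<times> bool) list" where
  "norm w = map (\<lambda>p. (fst p, False)) w"

lemma cnt_norm[simp]: "cnt x (norm w) = cnt x w"
  by (induction w) (auto simp: norm_def)

lemma norm_append[simp]: "norm (u @ v) = norm u @ norm v" by (simp add: norm_def)

definition par :: "('a \<times> bool) list \<Rightarrow> 'a set" where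
  "par w = {x. odd (cnt x w)}"

lemma par_sub: "par w \<subseteq> fst ` set w"
proof
  fix x assume "x \<in> par w"
  hence "cnt x w \<noteq> 0" unfolding par_def by (metis even_zero mem_Collect_eq)
  hence "filter (\<lambda>p. fst p = x) w \<noteq> []" by (simp add: cnt_def)
  thus "x \<in> fst ` set w" by (auto simp: filter_empty_conv)
qed

lemma finite_par[simp]: "finite (par w)"
  by (rule finite_subset[OF par_sub]) simp

context ea2
begin

lemma U_rel_eq: assumes T: "T \<subseteq> carrier G"
  shows "U_relators G T = {[(t, False), (t, False)] | t. t \<in> T}
     \<union> {[(t, False), (s, False), (t, True), (s, True)] | t s. t \<in> T \<and> s \<in> T}"
proof -
  have e: "t \<otimes> t \<otimes> inv s = s" if "t \<in> T" "s \<in> T" for t s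
  proof -
    have "t \<in> carrier G" "s \<in> carrier G" using that T by auto
    thus ?thesis by simp
  qed
  have "{[(t, False), (s, False), (t, True), (t \<otimes> t \<otimes> inv s, True)] | t s. t \<in> T \<and> s \<in> T}
     = {[(t, False), (s, False), (t, True), (s, True)] | t s. t \<in> T \<and> s \<in> T}"
  proof (intro equalityI subsetI)
    fix r assume "r \<in> {[(t, False), (s, False), (t, True), (t \<otimes> t \<otimes> inv s, True)] | t s. t \<in> T \<and> s \<in> T}"
    then obtain t s where "r = [(t, False), (s, False), (t, True), (t \<otimes> t \<otimes> inv s, True)]" "t \<in> T" "s \<in> T"
      by blast
    thus "r \<in> {[(t, False), (s, False), (t, True), (s, True)] | t s. t \<in> T \<and> s \<in> T}"
      using e by auto
  next
    fix r assume "r \<in> {[(t, False), (s, False), (t, True), (s, True)] | t s. t \<in> T \<and> s \<in> T}"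
    then obtain t s where "r = [(t, False), (s, False), (t, True), (s, True)]" "t \<in> T" "s \<in> T"
      by blast
    thus "r \<in> {[(t, False), (s, False), (t, True), (t \<otimes> t \<otimes> inv s, True)] | t s. t \<in> T \<and> s \<in> T}"
      using e[of t s] by auto
  qed
  thus ?thesis unfolding U_relators_def by simp
qed

end

locale ea2T = ea2 G for G :: "('g, 'b) monoid_scheme" (structure) +
  fixes T :: "'g set" assumes T_sub: "T \<subseteq> carrier G"
begin

abbreviation "R \<equiv> U_relators G T"

lemma R_eq: "R = {[(t, False), (t, False)] | t. t \<in> T}
     \<union> {[(t, False), (s, False), (t, True), (s, True)] | t s. t \<in> T \<and> s \<in> T}"
  using U_rel_eq[OF T_sub] .

lemma R_even: "r \<in> R \<Longrightarrow> even (cnt y r)"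
  unfolding R_eq by auto

lemma pe_par: "pres_eq R w w' \<Longrightarrow> par w = par w'"
  unfolding par_def using pres_eq_par[OF R_even] by blast

lemma sqF: "t \<in> T \<Longrightarrow> pres_eq R [(t, False), (t, False)] []"
  using pres_eq.relator[of "[(t, False), (t, False)]" R "[]" "[]"] by (simp add: R_eq)

lemma flip: assumes "t \<in> T" shows "pres_eq R [(t, True)] [(t, False)]"
proof -
  have "pres_eq R ([(t, True)] @ [(t, False), (t, False)] @ []) ([(t, True)] @ [])"
    by (rule pres_eq.relator) (simp add: R_eq assms)
  hence 1: "pres_eq R [(t, True)] [(t, True), (t, False), (t, False)]"
    by (simp add: pres_eq.sym)
  have 2: "pres_eq R ([] @ [(t, True), (t, \<not> True)] @ [(t, False)]) ([] @ [(t, False)])"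
    by (rule pres_eq.cancel)
  show ?thesis using pres_eq.trans[OF 1] 2 by simp
qed

lemma comm: assumes "s \<in> T" "t \<in> T"
  shows "pres_eq R [(s, False), (t, False)] [(t, False), (s, False)]"
proof -
  let ?r = "[(s, False), (t, False), (s, True), (t, True)]"
  have r: "?r \<in> R" using assms by (simp add: R_eq)
  have 1: "pres_eq R ([] @ ?r @ [(t, False), (s, False)]) ([] @ [(t, False), (s, False)])"
    by (rule pres_eq.relator[OF r])
  have 2: "pres_eq R ([(s, False), (t, False), (s, True)] @ [(t, True), (t, \<not> True)] @ [(s, False)])
     ([(s, False), (t, False), (s, True)] @ [(s, False)])"
    by (rule pres_eq.cancel)
  have 3: "pres_eq R ([(s, False), (t, False)] @ [(s, True), (s, \<not> True)] @ [])
     ([(s, False), (t, False)] @ [])"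
    by (rule pres_eq.cancel)
  have c2: "pres_eq R (?r @ [(t, False), (s, False)]) [(s, False), (t, False), (s, True), (s, False)]"
    using 2 by simp
  have c3: "pres_eq R [(s, False), (t, False), (s, True), (s, False)] [(s, False), (t, False)]"
    using 3 by simp
  have "pres_eq R (?r @ [(t, False), (s, False)]) [(s, False), (t, False)]"
    using pres_eq.trans[OF c2 c3] .
  thus ?thesis using 1 by (metis append_Nil pres_eq.sym pres_eq.trans)
qed

definition Tword :: "('g \<times> bool) list \<Rightarrow> bool" where
  "Tword w \<longleftrightarrow> fst ` set w \<subseteq> T"

definition Fword :: "('g \<times> bool) list \<Rightarrow> bool" where
  "Fword w \<longleftrightarrow> (\<forall>p \<in> set w. fst p \<in> T \<and> snd p = False)"

lemma norm_eq: "Tword w \<Longrightarrow> pres_eq R w (norm w)"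
proof (induction w)
  case Nil then show ?case by (simp add: norm_def pres_eq.refl)
next
  case (Cons p w)
  obtain x b where p: "p = (x, b)" by force
  have x: "x \<in> T" using Cons.prems p by (simp add: Tword_def)
  have IH: "pres_eq R w (norm w)" using Cons by (simp add: Tword_def)
  have 1: "pres_eq R [(x, b)] [(x, False)]" using flip[OF x] by (cases b) (auto intro: pres_eq.refl)
  have "pres_eq R ([(x, b)] @ w) ([(x, False)] @ norm w)" by (rule pres_eq_cong2[OF 1 IH])
  thus ?case by (simp add: p norm_def)
qed

lemma Fword_norm: "Tword w \<Longrightarrow> Fword (norm w)"
  by (auto simp: Tword_def Fword_def norm_def)

lemma move: "x \<in> T \<Longrightarrow> Fword p \<Longrightarrow> pres_eq R ((x, False) # p) (p @ [(x, False)])"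
proof (induction p)
  case Nil then show ?case by (simp add: pres_eq.refl)
next
  case (Cons q p)
  obtain y where q: "q = (y, False)" "y \<in> T" using Cons.prems by (cases q) (auto simp: Fword_def)
  have IH: "pres_eq R ((x, False) # p) (p @ [(x, False)])" using Cons by (simp add: Fword_def)
  have 1: "pres_eq R ([] @ [(x, False), (y, False)] @ p) ([] @ [(y, False), (x, False)] @ p)"
    by (rule pres_eq_cong[OF comm[OF Cons.prems(1) q(2)]])
  have 2: "pres_eq R ([(y, False)] @ ((x, False) # p) @ []) ([(y, False)] @ (p @ [(x, False)]) @ [])"
    by (rule pres_eq_cong[OF IH])
  show ?case using pres_eq.trans[OF 1] 2 q by simp
qed

lemma even_nil: "Fword w \<Longrightarrow> (\<forall>x. even (cnt x w)) \<Longrightarrow> pres_eq R w []"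
proof (induction "length w" arbitrary: w rule: less_induct)
  case less
  show ?case
  proof (cases w)
    case Nil then show ?thesis by (simp add: pres_eq.refl)
  next
    case (Cons p rest)
    obtain x where p: "p = (x, False)" "x \<in> T" using less.prems Cons by (cases p) (auto simp: Fword_def)
    have "odd (cnt x rest)" using less.prems(2)[rule_format, of x] Cons p by simp
    hence "filter (\<lambda>p. fst p = x) rest \<noteq> []" by (auto simp: cnt_def)
    then obtain q where q: "q \<in> set rest" "fst q = x" by (auto simp: filter_empty_conv)
    have "snd q = False" using less.prems(1) Cons q(1) unfolding Fword_def by auto
    hence q2: "q = (x, False)" using q(2) by (cases q) simp
    obtain u v where rest: "rest = u @ q # v" using split_list[OF q(1)] by blast
    have Fu: "Fword u" "Fword v" using less.prems(1) Cons rest by (auto simp: Fword_def)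
    have 1: "pres_eq R ([] @ ((x, False) # u) @ ((x, False) # v)) ([] @ (u @ [(x, False)]) @ ((x, False) # v))"
      by (rule pres_eq_cong[OF move[OF p(2) Fu(1)]])
    have 2: "pres_eq R (u @ [(x, False), (x, False)] @ v) (u @ v)"
      using pres_eq_cong[OF sqF[OF p(2)], of u v] by simp
    have 3: "pres_eq R (u @ v) []"
    proof (rule less.hyps)
      show "length (u @ v) < length w" using Cons rest by simp
      show "Fword (u @ v)" using Fu by (auto simp: Fword_def)
      show "\<forall>y. even (cnt y (u @ v))"
      proof
        fix y
        have "even (cnt y w)" using less.prems(2) by blast
        thus "even (cnt y (u @ v))" using Cons rest p q2 by (auto split: if_splits)
      qed
    qed
    have w: "w = (x, False) # u @ (x, False) # v" using Cons rest p q2 by simp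
    have d1: "pres_eq R ((x, False) # u @ (x, False) # v) (u @ (x, False) # (x, False) # v)" using 1 by simp
    have d2: "pres_eq R (u @ (x, False) # (x, False) # v) (u @ v)" using 2 by simp
    show ?thesis unfolding w by (rule pres_eq.trans[OF pres_eq.trans[OF d1 d2] 3])
  qed
qed

lemma par_eq_pres: assumes "Tword w" "Tword w'" "par w = par w'"
  shows "pres_eq R w w'"
proof -
  have ev: "\<forall>x. even (cnt x w) = even (cnt x w')"
  proof
    fix x show "even (cnt x w) = even (cnt x w')"
      using assms(3) unfolding par_def by blast
  qed
  have 1: "pres_eq R (norm w @ norm w') []"
    by (rule even_nil) (use assms Fword_norm ev in \<open>auto simp: Fword_def\<close>)
  have 2: "pres_eq R (norm w' @ norm w') []"
    by (rule even_nil) (use assms Fword_norm in \<open>auto simp: Fword_def\<close>)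
  have a: "pres_eq R w (norm w)" "pres_eq R w' (norm w')" using norm_eq assms by auto
  have "pres_eq R (norm w @ (norm w' @ norm w')) (norm w @ [])"
    using pres_eq_cong[OF 2, of "norm w" "[]"] by simp
  hence b: "pres_eq R (norm w) (norm w @ norm w' @ norm w')" by (simp add: pres_eq.sym)
  have c: "pres_eq R ((norm w @ norm w') @ norm w') ([] @ norm w')"
    using pres_eq_cong[OF 1, of "[]" "norm w'"] by simp
  show ?thesis
    by (metis a b c append.assoc append_Nil pres_eq.sym pres_eq.trans)
qed

lemma Tword_iff: "Tword w \<longleftrightarrow> set w \<subseteq> T \<times> UNIV"
  unfolding Tword_def by force

lemma Tword_append[simp]: "Tword (u @ v) \<longleftrightarrow> Tword u \<and> Tword v"
  unfolding Tword_def by auto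
lemma Tword_Cons[simp]: "Tword (p # w) \<longleftrightarrow> fst p \<in> T \<and> Tword w"
  unfolding Tword_def by auto
lemma Tword_Nil[simp]: "Tword []"
  unfolding Tword_def by auto

lemma class_eq: "pres_eq R a b \<Longrightarrow> word_class T R a = word_class T R b"
  unfolding word_class_def
  by (auto intro: pres_eq.trans pres_eq.sym)

lemma W_gen_eq: "W_gen G t = (cl 0, t, -1)"
  by (simp add: W_gen_def cl_zero)

lemma Wgen_carr[simp]: "t \<in> carrier G \<Longrightarrow> W_gen G t \<in> carrier BG"
  by (simp add: W_gen_eq)

lemma one_BG_carr[simp]: "\<one>\<^bsub>BG\<^esub> \<in> carrier BG"
  by (simp add: BG_one)

lemma Wgen_sq: assumes "t \<in> carrier G" shows "W_gen G t \<otimes>\<^bsub>BG\<^esub> W_gen G t = \<one>\<^bsub>BG\<^esub>"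
proof -
  have "cl (0 + 0 + frag_of (t, t)) = cl 0" using assms rel3[of t] by (subst cl_eq) auto
  thus ?thesis using assms by (simp add: W_gen_eq BG_mult BG_one)
qed

lemma Wgen_comm: assumes "t \<in> carrier G" "s \<in> carrier G"
  shows "W_gen G t \<otimes>\<^bsub>BG\<^esub> W_gen G s = W_gen G s \<otimes>\<^bsub>BG\<^esub> W_gen G t"
proof -
  have "cl (0 + 0 + frag_of (t, s)) = cl (0 + 0 + frag_of (s, t))" using assms rel_symm[of t s] by (subst cl_eq) auto
  moreover have "t \<otimes> s = s \<otimes> t" using assms by (simp add: m_comm)
  ultimately show ?thesis using assms by (simp add: W_gen_eq BG_mult)
qed

lemma inv_BG_Wgen: "t \<in> carrier G \<Longrightarrow> inv\<^bsub>BG\<^esub> (W_gen G t) = W_gen G t"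
  by (rule group.inv_equality[OF BG_group]) (auto simp: Wgen_sq)

lemma Wgen_sub: "W_gen G ` T \<subseteq> carrier BG"
  using T_sub by auto

lemma carrW: "carrier (W_group G T) = generate BG (W_gen G ` T)"
  unfolding W_group_def carrier_subgroup_generated using Wgen_sub
  by (simp add: Int_absorb1)

lemma W_grp: "group (W_group G T)"
  unfolding W_group_def by (rule group.group_subgroup_generated[OF BG_group])

lemma Wgen_W: "t \<in> T \<Longrightarrow> W_gen G t \<in> carrier (W_group G T)"
  unfolding carrW by (rule generate.incl) simp

lemma inv_W: "t \<in> T \<Longrightarrow> inv\<^bsub>W_group G T\<^esub> (W_gen G t) = W_gen G t"
proof -
  assume t: "t \<in> T"
  have "inv\<^bsub>W_group G T\<^esub> (W_gen G t) = inv\<^bsub>BG\<^esub> (W_gen G t)"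
    unfolding W_group_def by (rule group.inv_subgroup_generated[OF BG_group]) (use Wgen_W[OF t] in \<open>simp add: W_group_def\<close>)
  also have "\<dots> = W_gen G t" using t T_sub by (intro inv_BG_Wgen) auto
  finally show ?thesis .
qed

definition hgen :: "'g \<Rightarrow> ('g \<times> 'g \<Rightarrow>\<^sub>0 int) set \<times> 'g \<times> int" where
  "hgen x = (if x \<in> T then W_gen G x else \<one>\<^bsub>BG\<^esub>)"

definition ev :: "('g \<times> bool) list \<Rightarrow> ('g \<times> 'g \<Rightarrow>\<^sub>0 int) set \<times> 'g \<times> int" where
  "ev w = foldr (\<lambda>p acc. hgen (fst p) \<otimes>\<^bsub>BG\<^esub> acc) w \<one>\<^bsub>BG\<^esub>"

lemma hgen_carr[simp]: "hgen x \<in> carrier BG"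
  using T_sub by (auto simp: hgen_def)

lemma ev_Nil[simp]: "ev [] = \<one>\<^bsub>BG\<^esub>" by (simp add: ev_def)
lemma ev_Cons: "ev (p # w) = hgen (fst p) \<otimes>\<^bsub>BG\<^esub> ev w" by (simp add: ev_def)

lemma ev_carr[simp]: "ev w \<in> carrier BG"
proof (induction w)
  case (Cons p w) then show ?case using monoid.m_closed[OF group.is_monoid[OF BG_group]] by (simp add: ev_Cons)
qed simp

lemma ev_append: "ev (u @ v) = ev u \<otimes>\<^bsub>BG\<^esub> ev v"
proof (induction u)
  case Nil then show ?case using monoid.l_one[OF group.is_monoid[OF BG_group]] by simp
next
  case (Cons p u) then show ?case using monoid.m_assoc[OF group.is_monoid[OF BG_group]] by (simp add: ev_Cons)
qed

lemma hgen_sq: "hgen x \<otimes>\<^bsub>BG\<^esub> hgen x = \<one>\<^bsub>BG\<^esub>"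
  using T_sub Wgen_sq[of x] monoid.l_one[OF group.is_monoid[OF BG_group]] by (auto simp: hgen_def)

lemma hgen_comm: "hgen x \<otimes>\<^bsub>BG\<^esub> hgen y = hgen y \<otimes>\<^bsub>BG\<^esub> hgen x"
proof -
  interpret B: group BG by (rule BG_group)
  show ?thesis using T_sub Wgen_comm[of x y] by (auto simp: hgen_def)
qed

lemma ev_rel: "r \<in> R \<Longrightarrow> ev r = \<one>\<^bsub>BG\<^esub>"
proof -
  interpret B: group BG by (rule BG_group)
  assume "r \<in> R"
  then consider t where "r = [(t, False), (t, False)]" | t s where "r = [(t, False), (s, False), (t, True), (s, True)]"
    unfolding R_eq by blast
  thus ?thesis
  proof cases
    case 1 then show ?thesis by (simp add: ev_Cons hgen_sq)
  next
    case 2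
    have "ev r = hgen t \<otimes>\<^bsub>BG\<^esub> (hgen s \<otimes>\<^bsub>BG\<^esub> (hgen t \<otimes>\<^bsub>BG\<^esub> hgen s))" using 2 by (simp add: ev_Cons)
    also have "\<dots> = hgen t \<otimes>\<^bsub>BG\<^esub> (hgen t \<otimes>\<^bsub>BG\<^esub> (hgen s \<otimes>\<^bsub>BG\<^esub> hgen s))"
      by (simp flip: B.m_assoc add: hgen_comm[of s t])
    also have "\<dots> = \<one>\<^bsub>BG\<^esub>" by (simp add: hgen_sq)
    finally show ?thesis .
  qed
qed

lemma ev_pres: "pres_eq R w w' \<Longrightarrow> ev w = ev w'"
proof (induction rule: pres_eq.induct)
  case (cancel u x b v)
  interpret B: group BG by (rule BG_group)
  have 1: "ev [(x, b), (x, \<not> b)] = \<one>\<^bsub>BG\<^esub>" by (simp add: ev_Cons hgen_sq)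
  have "ev (u @ [(x, b), (x, \<not> b)] @ v) = ev u \<otimes>\<^bsub>BG\<^esub> (ev [(x, b), (x, \<not> b)] \<otimes>\<^bsub>BG\<^esub> ev v)"
    by (simp only: ev_append)
  also have "\<dots> = ev (u @ v)" unfolding 1 by (simp add: ev_append)
  finally show ?case .
next
  case (relator r u v)
  interpret B: group BG by (rule BG_group)
  show ?case using ev_rel[OF relator] by (simp add: ev_append)
qed auto

lemma eval_ev: "Tword w \<Longrightarrow> eval_word (W_group G T) (W_gen G) w = ev w"
proof (induction w)
  case Nil then show ?case by (simp add: eval_word_def W_group_def)
next
  case (Cons p w)
  obtain x b where p: "p = (x, b)" by force
  have x: "x \<in> T" using Cons.prems p by simp
  have "eval_word (W_group G T) (W_gen G) (p # w) =
     (if b then inv\<^bsub>W_group G T\<^esub> (W_gen G x) else W_gen G x) \<otimes>\<^bsub>W_group G T\<^esub> eval_word (W_group G T) (W_gen G) w"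
    by (simp add: eval_word_def p)
  also have "\<dots> = W_gen G x \<otimes>\<^bsub>BG\<^esub> ev w"
  proof -
    have "(if b then inv\<^bsub>W_group G T\<^esub> (W_gen G x) else W_gen G x) = W_gen G x" using inv_W[OF x] by simp
    moreover have "monoid.mult (W_group G T) = monoid.mult BG" by (simp add: W_group_def)
    ultimately show ?thesis using Cons x by simp
  qed
  finally show ?case using x by (simp add: ev_Cons p hgen_def)
qed

lemma phi_class: assumes "Tword w" shows "phi_map G T (word_class T R w) = ev w"
proof -
  let ?w = "SOME w'. w' \<in> word_class T R w"
  have "w \<in> word_class T R w" using assms by (simp add: word_class_def Tword_iff pres_eq.refl)
  hence "?w \<in> word_class T R w" by (rule someI)
  hence 1: "Tword ?w" "pres_eq R w ?w" by (auto simp: word_class_def Tword_iff)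
  have "phi_map G T (word_class T R w) = eval_word (W_group G T) (W_gen G) ?w"
    by (simp add: phi_map_def induced_hom_def)
  also have "\<dots> = ev ?w" by (rule eval_ev[OF 1(1)])
  also have "\<dots> = ev w" using ev_pres[OF 1(2)] by simp
  finally show ?thesis .
qed

definition gp :: "('g \<times> bool) list \<Rightarrow> 'g" where
  "gp w = foldr (\<lambda>p acc. fst p \<otimes> acc) w \<one>"

lemma gp_Nil[simp]: "gp [] = \<one>" by (simp add: gp_def)
lemma gp_Cons[simp]: "gp (p # w) = fst p \<otimes> gp w" by (simp add: gp_def)

lemma gp_carr[simp]: "Tword w \<Longrightarrow> gp w \<in> carrier G"
  by (induction w) (use T_sub in auto)

primrec lc :: "('g \<times> bool) list \<Rightarrow> ('g \<times> 'g \<Rightarrow>\<^sub>0 int)" where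
  "lc [] = 0"
| "lc (p # w) = lc w + frag_of (fst p, gp w)"

lemma lc_carr[simp]: "Tword w \<Longrightarrow> lc w \<in> carrier F"
  by (induction w) (use T_sub in auto)

lemma ev_form: "Tword w \<Longrightarrow> ev w = (cl (lc w), gp w, (-1) ^ length w)"
proof (induction w)
  case Nil then show ?case by (simp add: BG_one)
next
  case (Cons p w)
  have x: "fst p \<in> T" "fst p \<in> carrier G" using Cons.prems T_sub by auto
  have "ev (p # w) = (cl 0, fst p, -1) \<otimes>\<^bsub>BG\<^esub> (cl (lc w), gp w, (-1) ^ length w)"
    using Cons x by (simp add: ev_Cons hgen_def W_gen_eq)
  also have "\<dots> = (cl (lc (p # w)), gp (p # w), (-1) ^ length (p # w))"
    using Cons x by (simp add: BG_mult)
  finally show ?case .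
qed

lemma par_Cons: "par (p # w) = (if fst p \<in> par w then par w - {fst p} else insert (fst p) (par w))"
  by (auto simp: par_def)

lemma par_append: "par (u @ v) = (par u - par v) \<union> (par v - par u)"
  by (auto simp: par_def)

lemma par_T: "Tword w \<Longrightarrow> par w \<subseteq> T"
  using par_sub[of w] by (auto simp: Tword_def)

lemma gp_par: "Tword w \<Longrightarrow> gp w = finprod G (\<lambda>x. x) (par w)"
proof (induction w)
  case Nil then show ?case by (simp add: par_def)
next
  case (Cons p w)
  let ?x = "fst p" and ?P = "par w"
  have x: "?x \<in> carrier G" using Cons.prems T_sub by auto
  have P: "?P \<subseteq> carrier G" "finite ?P" using par_T[of w] Cons.prems T_sub by auto
  hence Pf: "(\<lambda>x. x) \<in> ?P \<rightarrow> carrier G" "(\<lambda>x. x) \<in> (?P - {?x}) \<rightarrow> carrier G" by auto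
  show ?case
  proof (cases "?x \<in> ?P")
    case True
    have "finprod G (\<lambda>x. x) ?P = finprod G (\<lambda>x. x) (insert ?x (?P - {?x}))"
      using True by (simp add: insert_absorb)
    also have "\<dots> = ?x \<otimes> finprod G (\<lambda>x. x) (?P - {?x})"
      using P x by (intro finprod_insert) auto
    finally have "?x \<otimes> finprod G (\<lambda>x. x) ?P = finprod G (\<lambda>x. x) (?P - {?x})"
      using x Pf by simp
    thus ?thesis using Cons True by (simp add: par_Cons)
  next
    case False
    have "finprod G (\<lambda>x. x) (insert ?x ?P) = ?x \<otimes> finprod G (\<lambda>x. x) ?P"
      using P x False by (intro finprod_insert) auto
    thus ?thesis using Cons False by (simp add: par_Cons)
  qed
qed

lemma sign_par: "((-1::int) ^ length w) = (-1) ^ card (par w)"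
proof (induction w)
  case Nil then show ?case by (simp add: par_def)
next
  case (Cons p w)
  show ?case
  proof (cases "fst p \<in> par w")
    case True
    have c: "card (par w) = Suc (card (par w - {fst p}))"
      using True by (metis card.remove finite_par)
    have "(-1::int) ^ length (p # w) = - ((-1) ^ card (par w))" using Cons by simp
    also have "\<dots> = (-1) ^ card (par w - {fst p})" unfolding c by simp
    finally show ?thesis using True by (simp add: par_Cons)
  next
    case False
    thus ?thesis using Cons by (simp add: par_Cons)
  qed
qed

lemma ev_sq: "Tword b \<Longrightarrow> ev b \<otimes>\<^bsub>BG\<^esub> ev b = \<one>\<^bsub>BG\<^esub>"
proof -
  assume b: "Tword b"
  have "par (b @ b) = par []" by (simp add: par_append par_def)
  hence "pres_eq R (b @ b) []" using b by (intro par_eq_pres) auto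
  hence "ev (b @ b) = ev []" by (rule ev_pres)
  thus ?thesis by (simp add: ev_append)
qed

lemma inj_core:
  assumes K: "\<And>w. Tword w \<Longrightarrow> ev w = \<one>\<^bsub>BG\<^esub> \<Longrightarrow> par w = {}"
  shows "inj_on (phi_map G T) (carrier (U_group G T))"
proof (rule inj_onI)
  fix A B assume A: "A \<in> carrier (U_group G T)" and B: "B \<in> carrier (U_group G T)"
    and eq: "phi_map G T A = phi_map G T B"
  obtain a where a: "A = word_class T R a" "Tword a"
    using A by (auto simp: U_group_def presented_group_def Tword_iff)
  obtain b where b: "B = word_class T R b" "Tword b"
    using B by (auto simp: U_group_def presented_group_def Tword_iff)
  have "ev a = ev b" using eq a b by (simp add: phi_class)
  hence "ev (a @ b) = \<one>\<^bsub>BG\<^esub>" using ev_sq[OF b(2)] by (simp add: ev_append)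
  hence "par (a @ b) = {}" using K a b by simp
  hence "par a = par b" by (auto simp: par_append)
  hence "pres_eq R a b" using a b par_eq_pres by blast
  thus "A = B" using a b class_eq by simp
qed

lemma part1: assumes "f2_basis G (T - {\<one>})"
  shows "inj_on (phi_map G T) (carrier (U_group G T))"
proof (rule inj_core)
  fix w assume w: "Tword w" and e: "ev w = \<one>\<^bsub>BG\<^esub>"
  have ef: "cl (lc w) = cl 0" "gp w = \<one>" "((-1::int) ^ length w) = 1"
    using e ev_form[OF w] by (simp_all add: BG_one)
  let ?P = "par w"
  have P: "?P \<subseteq> T" "finite ?P" using par_T[OF w] by auto
  have Pc: "?P \<subseteq> carrier G" using P T_sub by auto
  have fp: "finprod G (\<lambda>x. x) ?P = \<one>" using ef gp_par[OF w] by simp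
  have fp2: "finprod G (\<lambda>x. x) (?P - {\<one>}) = \<one>"
  proof (cases "\<one> \<in> ?P")
    case True
    have "finprod G (\<lambda>x. x) ?P = finprod G (\<lambda>x. x) (insert \<one> (?P - {\<one>}))"
      using True by (simp add: insert_absorb)
    also have "\<dots> = \<one> \<otimes> finprod G (\<lambda>x. x) (?P - {\<one>})"
      using P Pc by (intro finprod_insert) auto
    finally have "finprod G (\<lambda>x. x) ?P = \<one> \<otimes> finprod G (\<lambda>x. x) (?P - {\<one>})" .
    moreover have "finprod G (\<lambda>x. x) (?P - {\<one>}) \<in> carrier G" using Pc by (intro finprod_closed) auto
    ultimately show ?thesis using fp by simp
  next
    case False then show ?thesis using fp by simp
  qed
  have "?P - {\<one>} = {}"
  proof (rule ccontr)
    assume ne: "?P - {\<one>} \<noteq> {}"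
    have "finite (?P - {\<one>}) \<and> ?P - {\<one>} \<subseteq> T - {\<one>} \<and> ?P - {\<one>} \<noteq> {}" using P ne by auto
    hence "finprod G (\<lambda>x. x) (?P - {\<one>}) \<noteq> \<one>" using assms unfolding f2_basis_def f2_independent_def by blast
    thus False using fp2 by simp
  qed
  hence sub: "?P \<subseteq> {\<one>}" by auto
  have "even (card ?P)" using ef(3) sign_par[of w] by (simp add: minus_one_power_iff split: if_splits)
  moreover have "card ?P \<le> 1" using card_mono[OF _ sub] by simp
  ultimately have "card ?P = 0" by presburger
  thus "?P = {}" using P by simp
qed

end

lemma elem_gen_sub:
  fixes K :: "('a, 'c) monoid_scheme" (structure) and Y :: "'a set"
  assumes K: "comm_group K" and Y: "Y \<subseteq> carrier K" "finite Y" and sq: "\<And>x. x \<in> Y \<Longrightarrow> x \<otimes> x = \<one>"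
  shows "generate K Y \<subseteq> (\<lambda>S. finprod K (\<lambda>x. x) S) ` Pow Y"
proof -
  interpret comm_group K by (rule K)
  have fin: "\<And>S. S \<subseteq> Y \<Longrightarrow> finite S" using Y finite_subset by blast
  have Pi: "\<And>S. S \<subseteq> Y \<Longrightarrow> (\<lambda>x. x) \<in> S \<rightarrow> carrier K" using Y by auto
  have symd: "finprod K (\<lambda>x. x) S1 \<otimes> finprod K (\<lambda>x. x) S2 = finprod K (\<lambda>x. x) ((S1 - S2) \<union> (S2 - S1))"
    if S: "S1 \<subseteq> Y" "S2 \<subseteq> Y" for S1 S2
  proof -
    let ?f = "finprod K (\<lambda>x. x)"
    have s1: "S1 = (S1 - S2) \<union> (S1 \<inter> S2)" "S2 = (S2 - S1) \<union> (S1 \<inter> S2)" by auto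
    have h1: "?f S1 = ?f (S1 - S2) \<otimes> ?f (S1 \<inter> S2)"
      by (subst s1(1), rule finprod_Un_disjoint) (use S fin Pi Y in auto)
    have h2: "?f S2 = ?f (S2 - S1) \<otimes> ?f (S1 \<inter> S2)"
      by (subst s1(2), rule finprod_Un_disjoint) (use S fin Pi Y in auto)
    have h3: "?f ((S1 - S2) \<union> (S2 - S1)) = ?f (S1 - S2) \<otimes> ?f (S2 - S1)"
      by (rule finprod_Un_disjoint) (use S fin Pi Y in auto)
    have "?f (S1 \<inter> S2) \<otimes> ?f (S1 \<inter> S2) = finprod K (\<lambda>x. x \<otimes> x) (S1 \<inter> S2)"
      by (rule finprod_multf[symmetric]) (use S Y in auto)
    also have "\<dots> = \<one>" by (rule finprod_one_eqI) (use S sq in auto)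
    finally have h4: "?f (S1 \<inter> S2) \<otimes> ?f (S1 \<inter> S2) = \<one>" .
    have c: "?f (S1 - S2) \<in> carrier K" "?f (S2 - S1) \<in> carrier K" "?f (S1 \<inter> S2) \<in> carrier K"
      using S Pi by (auto intro!: finprod_closed)
    show ?thesis unfolding h1 h2 h3 using c h4
      by (metis m_assoc m_comm m_closed r_one)
  qed
  show ?thesis
  proof
    fix h assume "h \<in> generate K Y"
    thus "h \<in> (\<lambda>S. finprod K (\<lambda>x. x) S) ` Pow Y"
    proof (induction rule: generate.induct)
      case one
      have "finprod K (\<lambda>x. x) {} = \<one>" by simp
      thus ?case by (metis Pow_bottom image_eqI)
    next
      case (incl h)
      have "finprod K (\<lambda>x. x) {h} = h" using incl Y by auto
      thus ?case using incl by (metis Pow_iff empty_subsetI image_eqI insert_subset)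
    next
      case (inv h)
      have "inv h = h" using inv Y sq by (intro inv_equality) auto
      moreover have "finprod K (\<lambda>x. x) {h} = h" using inv Y by auto
      ultimately show ?case using inv by (metis Pow_iff empty_subsetI image_eqI insert_subset)
    next
      case (eng h1 h2)
      then obtain S1 S2 where "S1 \<subseteq> Y" "S2 \<subseteq> Y" "h1 = finprod K (\<lambda>x. x) S1" "h2 = finprod K (\<lambda>x. x) S2"
        by auto
      moreover have "(S1 - S2) \<union> (S2 - S1) \<in> Pow Y" using calculation by auto
      ultimately show ?case using symd by auto
    qed
  qed
qed

lemma elem_gen_card:
  fixes K :: "('a, 'c) monoid_scheme" (structure) and Y :: "'a set"
  assumes K: "comm_group K" and Y: "Y \<subseteq> carrier K" "finite Y" and sq: "\<And>x. x \<in> Y \<Longrightarrow> x \<otimes> x = \<one>"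
  shows "finite (generate K Y) \<and> card (generate K Y) \<le> 2 ^ card Y"
proof -
  have s: "generate K Y \<subseteq> (\<lambda>S. finprod K (\<lambda>x. x) S) ` Pow Y" by (rule elem_gen_sub[OF assms])
  have f: "finite ((\<lambda>S. finprod K (\<lambda>x. x) S) ` Pow Y)" using Y by simp
  have "card (generate K Y) \<le> card ((\<lambda>S. finprod K (\<lambda>x. x) S) ` Pow Y)" by (rule card_mono[OF f s])
  also have "\<dots> \<le> card (Pow Y)" by (rule card_image_le) (use Y in simp)
  also have "\<dots> = 2 ^ card Y" using Y by (simp add: card_Pow)
  finally show ?thesis using finite_subset[OF s f] by simp
qed

context ea2
begin

lemma E_comm: "comm_group E"
proof -
  have g: "group E" unfolding ext_square_def by (rule normal.factorgroup_is_group[OF HH_normal])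
  show ?thesis
  proof (rule group.group_comm_groupI[OF g])
    fix x y assume "x \<in> carrier E" "y \<in> carrier E"
    then obtain c d where "x = cl c" "y = cl d" "c \<in> carrier F" "d \<in> carrier F" by (auto simp: carrE)
    thus "x \<otimes>\<^bsub>E\<^esub> y = y \<otimes>\<^bsub>E\<^esub> x" by (simp add: cl_mult add.commute)
  qed
qed

lemma wedge_carr[simp]: "a \<in> carrier G \<Longrightarrow> b \<in> carrier G \<Longrightarrow> wedge G a b \<in> carrier E"
  by (simp add: wedge_cl)

lemma wedge_mult1: assumes "a \<in> carrier G" "a' \<in> carrier G" "b \<in> carrier G"
  shows "wedge G (a \<otimes> a') b = wedge G a b \<otimes>\<^bsub>E\<^esub> wedge G a' b"
proof -
  have "cl (frag_of (a \<otimes> a', b)) = cl (frag_of (a, b) + frag_of (a', b))"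
    using assms rel1[of a a' b] by (subst cl_eq) (auto simp: diff_diff_eq)
  thus ?thesis using assms by (simp add: wedge_cl cl_mult)
qed

lemma wedge_mult2: assumes "a \<in> carrier G" "b \<in> carrier G" "b' \<in> carrier G"
  shows "wedge G a (b \<otimes> b') = wedge G a b \<otimes>\<^bsub>E\<^esub> wedge G a b'"
proof -
  have "cl (frag_of (a, b \<otimes> b')) = cl (frag_of (a, b) + frag_of (a, b'))"
    using assms rel2[of a b b'] by (subst cl_eq) (auto simp: diff_diff_eq)
  thus ?thesis using assms by (simp add: wedge_cl cl_mult)
qed

lemma wedge_one1: "b \<in> carrier G \<Longrightarrow> wedge G \<one> b = \<one>\<^bsub>E\<^esub>"
  using rel_one_l by (simp add: wedge_cl cl_eq_zero)
lemma wedge_one2: "b \<in> carrier G \<Longrightarrow> wedge G b \<one> = \<one>\<^bsub>E\<^esub>"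
  using rel_one_r by (simp add: wedge_cl cl_eq_zero)
lemma wedge_self: "b \<in> carrier G \<Longrightarrow> wedge G b b = \<one>\<^bsub>E\<^esub>"
  using rel3 by (simp add: wedge_cl cl_eq_zero)
lemma wedge_symm: "a \<in> carrier G \<Longrightarrow> b \<in> carrier G \<Longrightarrow> wedge G a b = wedge G b a"
  using rel_symm by (simp add: wedge_cl cl_eq)
lemma wedge_sq: assumes "a \<in> carrier G" "b \<in> carrier G"
  shows "wedge G a b \<otimes>\<^bsub>E\<^esub> wedge G a b = \<one>\<^bsub>E\<^esub>"
  using wedge_mult2[OF assms(1) assms(2) assms(2), symmetric] assms by (simp add: wedge_one2)

end

context ea2
begin

definition Xb :: "'g set \<Rightarrow> ('g \<times> 'g \<Rightarrow>\<^sub>0 int) set set" where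
  "Xb B = {wedge G x y | x y. x \<in> B \<and> y \<in> B \<and> x \<noteq> y}"

lemma Xb_sub: assumes B: "B \<subseteq> carrier G" shows "Xb B \<subseteq> carrier E"
proof
  fix z assume "z \<in> Xb B"
  then obtain x y where z: "z = wedge G x y" "x \<in> B" "y \<in> B" unfolding Xb_def by blast
  have "x \<in> carrier G" "y \<in> carrier G" using z B by auto
  thus "z \<in> carrier E" using z by simp
qed

lemma Xb_fin: assumes "finite B" shows "finite (Xb B)"
proof -
  have "Xb B \<subseteq> (\<lambda>(x, y). wedge G x y) ` (B \<times> B)" unfolding Xb_def by auto
  thus ?thesis using assms finite_subset by blast
qed

lemma Xb_card: assumes B: "finite B" "B \<subseteq> carrier G" shows "card (Xb B) \<le> card B choose 2"
proof -
  define pk where "pk A = (SOME x. x \<in> A)" for A :: "'g set"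
  define pk2 where "pk2 A = (SOME y. y \<in> A \<and> y \<noteq> pk A)" for A :: "'g set"
  have sub: "Xb B \<subseteq> (\<lambda>A. wedge G (pk A) (pk2 A)) ` {A. A \<subseteq> B \<and> card A = 2}"
  proof
    fix z assume "z \<in> Xb B"
    then obtain x y where z: "z = wedge G x y" "x \<in> B" "y \<in> B" "x \<noteq> y" unfolding Xb_def by blast
    let ?A = "{x, y}"
    have A: "?A \<subseteq> B \<and> card ?A = 2" using z by auto
    have p1: "pk ?A \<in> ?A" unfolding pk_def by (rule someI[of _ x]) simp
    have "\<exists>u. u \<in> ?A \<and> u \<noteq> pk ?A" using z(4) p1 by auto
    hence p2: "pk2 ?A \<in> ?A \<and> pk2 ?A \<noteq> pk ?A" unfolding pk2_def by (rule someI_ex)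
    have xy: "x \<in> carrier G" "y \<in> carrier G" using z B by auto
    have "(pk ?A = x \<and> pk2 ?A = y) \<or> (pk ?A = y \<and> pk2 ?A = x)" using p1 p2 by auto
    hence "z = wedge G (pk ?A) (pk2 ?A)"
    proof
      assume "pk ?A = x \<and> pk2 ?A = y" thus ?thesis using z(1) by simp
    next
      assume "pk ?A = y \<and> pk2 ?A = x" thus ?thesis using z(1) wedge_symm[OF xy] by simp
    qed
    thus "z \<in> (\<lambda>A. wedge G (pk A) (pk2 A)) ` {A. A \<subseteq> B \<and> card A = 2}"
      by (rule image_eqI) (use A in simp)
  qed
  have fin: "finite {A. A \<subseteq> B \<and> card A = 2}" using B by simp
  have "card (Xb B) \<le> card ((\<lambda>A. wedge G (pk A) (pk2 A)) ` {A. A \<subseteq> B \<and> card A = 2})"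
    by (rule card_mono[OF _ sub]) (use fin in simp)
  also have "\<dots> \<le> card {A. A \<subseteq> B \<and> card A = 2}" by (rule card_image_le[OF fin])
  also have "\<dots> = card B choose 2" by (rule n_subsets[OF B(1)])
  finally show ?thesis .
qed

definition Eb :: "'g set \<Rightarrow> ('g \<times> 'g \<Rightarrow>\<^sub>0 int) set set" where
  "Eb B = generate E (Xb B)"

lemma Eb_card: assumes B: "finite B" "B \<subseteq> carrier G"
  shows "finite (Eb B) \<and> card (Eb B) \<le> 2 ^ (card B choose 2)"
proof -
  have "finite (Eb B) \<and> card (Eb B) \<le> 2 ^ card (Xb B)"
    unfolding Eb_def
  proof (rule elem_gen_card[OF E_comm Xb_sub[OF B(2)] Xb_fin[OF B(1)]])
    fix z assume "z \<in> Xb B"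
    then obtain x y where "z = wedge G x y" "x \<in> B" "y \<in> B" unfolding Xb_def by blast
    thus "z \<otimes>\<^bsub>E\<^esub> z = \<one>\<^bsub>E\<^esub>" using B wedge_sq by auto
  qed
  moreover have "(2::nat) ^ card (Xb B) \<le> 2 ^ (card B choose 2)"
    by (rule power_increasing[OF Xb_card[OF B]]) simp
  ultimately show ?thesis by linarith
qed

lemma Gb_card: assumes B: "finite B" "B \<subseteq> carrier G"
  shows "finite (generate G B) \<and> card (generate G B) \<le> 2 ^ card B"
  by (rule elem_gen_card[OF cg B(2) B(1)]) (use B in auto)

lemma wedge_Eb1: assumes B: "B \<subseteq> carrier G" and y: "y \<in> B" and x: "x \<in> generate G B"
  shows "wedge G x y \<in> Eb B"
  using x
proof (induction rule: generate.induct)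
  case one then show ?case using B y by (simp add: wedge_one1 Eb_def generate.one subsetD)
next
  case (incl h)
  show ?case
  proof (cases "h = y")
    case True then show ?thesis using B y by (simp add: wedge_self Eb_def generate.one subsetD)
  next
    case False then show ?thesis using incl y unfolding Eb_def Xb_def by (intro generate.incl) blast
  qed
next
  case (inv h)
  have "inv h = h" using inv B by auto
  moreover have "wedge G h y \<in> Eb B"
  proof (cases "h = y")
    case True then show ?thesis using B y by (simp add: wedge_self Eb_def generate.one subsetD)
  next
    case False then show ?thesis using inv y unfolding Eb_def Xb_def by (intro generate.incl) blast
  qed
  ultimately show ?case by simp
next
  case (eng h1 h2)
  have c: "h1 \<in> carrier G" "h2 \<in> carrier G" using eng generate_in_carrier[OF B] by auto
  show ?case using eng c B y wedge_mult1[of h1 h2 y] unfolding Eb_def by (simp add: generate.eng subsetD)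
qed

lemma wedge_Eb: assumes B: "B \<subseteq> carrier G" and x: "x \<in> generate G B" and y: "y \<in> generate G B"
  shows "wedge G x y \<in> Eb B"
  using y
proof (induction rule: generate.induct)
  case one then show ?case using generate_in_carrier[OF B x] by (simp add: wedge_one2 Eb_def generate.one)
next
  case (incl h) then show ?case using wedge_Eb1[OF B _ x] by blast
next
  case (inv h)
  have "inv h = h" using inv B by auto
  thus ?case using wedge_Eb1[OF B inv x] by simp
next
  case (eng h1 h2)
  have c: "h1 \<in> carrier G" "h2 \<in> carrier G" using eng generate_in_carrier[OF B] by auto
  show ?case using eng c generate_in_carrier[OF B x] wedge_mult2[of x h1 h2] unfolding Eb_def by (simp add: generate.eng)
qed

end

context ea2T
begin

lemma lc_Eb: assumes B: "B \<subseteq> carrier G" shows "Tword w \<Longrightarrow> fst ` set w \<subseteq> generate G B \<Longrightarrow> cl (lc w) \<in> Eb B \<and> gp w \<in> generate G B"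
proof (induction w)
  case Nil then show ?case by (simp add: cl_zero Eb_def generate.one)
next
  case (Cons p w)
  have IH: "cl (lc w) \<in> Eb B" "gp w \<in> generate G B" using Cons by auto
  have p: "fst p \<in> generate G B" "fst p \<in> carrier G" using Cons.prems T_sub by auto
  have "cl (lc (p # w)) = cl (lc w) \<otimes>\<^bsub>E\<^esub> wedge G (fst p) (gp w)"
    using Cons.prems p by (simp add: wedge_cl cl_mult)
  moreover have "wedge G (fst p) (gp w) \<in> Eb B" by (rule wedge_Eb[OF B p(1) IH(2)])
  ultimately have "cl (lc (p # w)) \<in> Eb B" using IH unfolding Eb_def by (simp add: generate.eng)
  moreover have "gp (p # w) \<in> generate G B" using IH p by (simp add: generate.eng)
  ultimately show ?case by simp
qed

definition ws :: "'g set \<Rightarrow> ('g \<times> bool) list" where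
  "ws P = map (\<lambda>x. (x, False)) (SOME xs. set xs = P \<and> distinct xs)"

lemma cnt_map_distinct: "distinct xs \<Longrightarrow> cnt x (map (\<lambda>x. (x, False)) xs) = (if x \<in> set xs then 1 else 0)"
  by (induction xs) auto

lemma ws_props: assumes "finite P" "P \<subseteq> T"
  shows "Tword (ws P)" "par (ws P) = P" "fst ` set (ws P) = P"
proof -
  obtain xs where xs: "set xs = P \<and> distinct xs" using finite_distinct_list[OF assms(1)] by blast
  have s: "set (SOME xs. set xs = P \<and> distinct xs) = P \<and> distinct (SOME xs. set xs = P \<and> distinct xs)"
    by (rule someI[of _ xs]) (rule xs)
  show "fst ` set (ws P) = P" using s unfolding ws_def by (simp add: image_image)
  thus "Tword (ws P)" using assms unfolding Tword_def by simp
  show "par (ws P) = P" using s unfolding ws_def par_def by (auto simp: cnt_map_distinct)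
qed

lemma class_carr: "Tword w \<Longrightarrow> word_class T R w \<in> carrier (U_group G T)"
  by (auto simp: U_group_def presented_group_def Tword_iff)

lemma count_bound:
  assumes inj: "inj_on (phi_map G T) (carrier (U_group G T))"
    and B: "finite B" "B \<subseteq> carrier G" and S: "S \<subseteq> T" "S \<subseteq> generate G B"
  shows "card S \<le> (card B choose 2) + card B + 1"
proof -
  have finGb: "finite (generate G B)" "card (generate G B) \<le> 2 ^ card B" using Gb_card[OF B] by auto
  have finEb: "finite (Eb B)" "card (Eb B) \<le> 2 ^ (card B choose 2)" using Eb_card[OF B] by auto
  have finS: "finite S" using S finGb finite_subset by blast
  define f where "f P = ev (ws P)" for P
  let ?Tg = "Eb B \<times> generate G B \<times> {1::int, -1}"
  have inj_f: "inj_on f (Pow S)"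
  proof (rule inj_onI)
    fix P Q assume P: "P \<in> Pow S" and Q: "Q \<in> Pow S" and e: "f P = f Q"
    have fP: "finite P" "P \<subseteq> T" "finite Q" "Q \<subseteq> T" using P Q finS S finite_subset by auto
    note wP = ws_props[OF fP(1,2)] and wQ = ws_props[OF fP(3,4)]
    have "phi_map G T (word_class T R (ws P)) = phi_map G T (word_class T R (ws Q))"
      using e wP wQ by (simp add: f_def phi_class)
    hence "word_class T R (ws P) = word_class T R (ws Q)"
      using inj class_carr[OF wP(1)] class_carr[OF wQ(1)] by (simp add: inj_on_def)
    moreover have "ws Q \<in> word_class T R (ws Q)" using wQ by (simp add: word_class_def Tword_iff pres_eq.refl)
    ultimately have "ws Q \<in> word_class T R (ws P)" by simp
    hence "pres_eq R (ws P) (ws Q)" by (simp add: word_class_def)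
    thus "P = Q" using pe_par wP wQ by metis
  qed
  have img: "f ` Pow S \<subseteq> ?Tg"
  proof
    fix z assume "z \<in> f ` Pow S"
    then obtain P where P: "P \<subseteq> S" "z = f P" by auto
    have fP: "finite P" "P \<subseteq> T" using P finS S finite_subset by auto
    note wP = ws_props[OF fP]
    have "fst ` set (ws P) \<subseteq> generate G B" using wP P S by auto
    hence "cl (lc (ws P)) \<in> Eb B \<and> gp (ws P) \<in> generate G B" using lc_Eb[OF B(2) wP(1)] by blast
    moreover have "((-1::int) ^ length (ws P)) \<in> {1, -1}" by (simp add: minus_one_power_iff)
    ultimately show "z \<in> ?Tg" using P ev_form[OF wP(1)] by (simp add: f_def)
  qed
  have "card (Pow S) \<le> card ?Tg"
    by (rule card_inj_on_le[OF inj_f img]) (use finGb finEb in simp)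
  also have "\<dots> = card (Eb B) * (card (generate G B) * 2)" by (simp add: card_cartesian_product)
  also have "\<dots> \<le> 2 ^ (card B choose 2) * (2 ^ card B * 2)"
    using finGb finEb by (intro mult_mono) auto
  also have "\<dots> = 2 ^ ((card B choose 2) + card B + 1)" by (simp add: power_add)
  finally have "(2::nat) ^ card S \<le> 2 ^ ((card B choose 2) + card B + 1)" using finS by (simp add: card_Pow)
  thus ?thesis by (rule power_le_imp_le_exp[rotated]) simp
qed

lemma choose2_real: "real (n choose 2) = real n * (real n - 1) / 2"
proof -
  have "even (n * (n - 1))" by (cases n) auto
  hence "2 * (n choose 2) = n * (n - 1)" by (simp add: choose_two)
  hence "real (2 * (n choose 2)) = real (n * (n - 1))" by (simp only:)
  hence h: "2 * real (n choose 2) = real n * real (n - 1)" by simp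
  show ?thesis
  proof (cases n)
    case 0 then show ?thesis by simp
  next
    case (Suc m) then show ?thesis using h by simp
  qed
qed

lemma part2: assumes one: "\<one> \<in> T" and dim: "f2_dim G n"
  and gt: "real (card (T - {\<one>})) > real n * (real n + 1) / 2"
  shows "\<not> inj_on (phi_map G T) (carrier (U_group G T))"
proof
  assume inj: "inj_on (phi_map G T) (carrier (U_group G T))"
  obtain B where B: "f2_basis G B" "finite B" "card B = n" using dim by (auto simp: f2_dim_def)
  have Bc: "B \<subseteq> carrier G" "generate G B = carrier G" using B by (auto simp: f2_basis_def f2_independent_def)
  have TB: "T \<subseteq> generate G B" using T_sub Bc(2) by simp
  have "card T \<le> (card B choose 2) + card B + 1" by (rule count_bound[OF inj B(2) Bc(1) order_refl TB])
  hence c1: "card T \<le> (n choose 2) + n + 1" using B(3) by simp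
  have fT: "finite T" by (rule finite_subset[OF TB]) (use Gb_card[OF B(2) Bc(1)] in simp)
  have "card (T - {\<one>}) = card T - 1" using one fT by (simp add: card_Diff_singleton)
  hence "card (T - {\<one>}) \<le> (n choose 2) + n" using c1 by simp
  hence "real (card (T - {\<one>})) \<le> real (n choose 2) + real n" by linarith
  also have "\<dots> = real n * (real n + 1) / 2" by (simp add: choose2_real field_simps)
  finally show False using gt by simp
qed

lemma iso_inj: "phi_map G T \<in> iso (U_group G T) (W_group G T) \<Longrightarrow> inj_on (phi_map G T) (carrier (U_group G T))"
  by (simp add: iso_def bij_betw_def)

end

context ea2
begin

lemma gen_basis_lemma: assumes B: "B \<subseteq> carrier G" "generate G B = carrier G" "finite B"
  and ind: "\<And>S. S \<subseteq> B \<Longrightarrow> S \<noteq> {} \<Longrightarrow> finprod G (\<lambda>x. x) S \<noteq> \<one>"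
  shows "f2_dim G (card B)"
  unfolding f2_dim_def f2_basis_def f2_independent_def
  using B ind finite_subset by blast

lemma card8: assumes c: "a \<in> carrier G" "b \<in> carrier G" "c \<in> carrier G"
  and a1: "a \<noteq> \<one>" and b1: "b \<notin> generate G {a}" and c1: "c \<notin> generate G {a, b}"
  and S: "finite S" "generate G {a, b, c} \<subseteq> S"
  shows "8 \<le> card S"
proof -
  let ?H = "generate G {a, b}"
  let ?X = "{\<one>, a, b, a \<otimes> b}"
  have Hc: "?H \<subseteq> carrier G" using c by (intro generate_incl) auto
  have X: "?X \<subseteq> ?H" by (auto intro: generate.one generate.incl generate.eng)
  have ab: "a \<in> generate G {a}" "\<one> \<in> generate G {a}" by (auto intro: generate.incl generate.one)
  have d: "b \<noteq> \<one>" "b \<noteq> a" using b1 ab by auto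
  have d2: "a \<otimes> b \<noteq> \<one>" "a \<otimes> b \<noteq> a" "a \<otimes> b \<noteq> b"
  proof -
    show "a \<otimes> b \<noteq> \<one>" proof assume "a \<otimes> b = \<one>" hence "a \<otimes> (a \<otimes> b) = a" using c by simp
      thus False using c d by simp qed
    show "a \<otimes> b \<noteq> a" proof assume "a \<otimes> b = a" hence "a \<otimes> (a \<otimes> b) = \<one>" using c by simp
      thus False using c d by simp qed
    show "a \<otimes> b \<noteq> b" proof assume "a \<otimes> b = b" hence "a \<otimes> b \<otimes> b = \<one>" using c by simp
      thus False using c a1 by (simp add: m_assoc) qed
  qed
  have cX: "card ?X = 4" using a1 d d2 by auto
  let ?Y = "(\<lambda>x. c \<otimes> x) ` ?X"
  have inj: "inj_on (\<lambda>x. c \<otimes> x) ?X"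
  proof (rule inj_onI)
    fix x y assume "x \<in> ?X" "y \<in> ?X" "c \<otimes> x = c \<otimes> y"
    thus "x = y" using c X Hc by (metis l_cancel subsetD)
  qed
  have cY: "card ?Y = 4" using card_image[OF inj] cX by simp
  have disj: "?X \<inter> ?Y = {}"
  proof (rule ccontr)
    assume "?X \<inter> ?Y \<noteq> {}"
    then obtain x y where xy: "x \<in> ?X" "y \<in> ?X" "y = c \<otimes> x" by blast
    have xc: "x \<in> carrier G" using xy X Hc by blast
    have "c = y \<otimes> x" using xy xc c by (simp add: m_assoc)
    moreover have "y \<otimes> x \<in> ?H" using xy X by (auto intro: generate.eng)
    ultimately show False using c1 by simp
  qed
  have sub: "?X \<union> ?Y \<subseteq> generate G {a, b, c}"
  proof -
    have m: "?H \<subseteq> generate G {a, b, c}" by (rule mono_generate) auto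
    have cc: "c \<in> generate G {a, b, c}" by (auto intro: generate.incl)
    have "?Y \<subseteq> generate G {a, b, c}" using X m cc by (auto intro: generate.eng)
    thus ?thesis using X m by auto
  qed
  have "card (?X \<union> ?Y) = card ?X + card ?Y"
    by (rule card_Un_disjoint) (use disj in auto)
  hence "card (?X \<union> ?Y) = 8" using cX cY by simp
  moreover have "card (?X \<union> ?Y) \<le> card S" using sub S by (intro card_mono) auto
  ultimately show ?thesis by simp
qed

end

context ea2T
begin

lemma part3a: assumes TG: "T = carrier G" and inj: "inj_on (phi_map G T) (carrier (U_group G T))"
  shows "\<exists>n. f2_dim G n \<and> n \<le> 2"
proof -
  have one_gen: "\<And>A. \<one> \<in> generate G A" by (rule generate.one)
  show ?thesis
  proof (cases "generate G {} = carrier G")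
    case True
    have "f2_dim G (card ({}::'g set))" by (rule gen_basis_lemma) (use True in auto)
    thus ?thesis by auto
  next
    case False
    then obtain a where a: "a \<in> carrier G" "a \<notin> generate G {}"
      using generate_incl[of "{}"] by blast
    have a1: "a \<noteq> \<one>" using a one_gen by auto
    show ?thesis
    proof (cases "generate G {a} = carrier G")
      case True
      have "f2_dim G (card {a})"
      proof (rule gen_basis_lemma)
        fix S assume "S \<subseteq> {a}" "S \<noteq> {}"
        hence "S = {a}" by auto
        thus "finprod G (\<lambda>x. x) S \<noteq> \<one>" using a a1 by simp
      qed (use True a in auto)
      thus ?thesis by auto
    next
      case False
      then obtain b where b: "b \<in> carrier G" "b \<notin> generate G {a}"
        using generate_incl[of "{a}"] a by blast
      have ab: "a \<in> generate G {a}" by (auto intro: generate.incl)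
      have b1: "b \<noteq> \<one>" "b \<noteq> a" using b one_gen ab by auto
      have ab1: "a \<otimes> b \<noteq> \<one>"
      proof assume "a \<otimes> b = \<one>" hence "a \<otimes> (a \<otimes> b) = a" using a b by simp
        thus False using a b b1 by simp qed
      show ?thesis
      proof (cases "generate G {a, b} = carrier G")
        case True
        have "f2_dim G (card {a, b})"
        proof (rule gen_basis_lemma)
          fix S assume S: "S \<subseteq> {a, b}" "S \<noteq> {}"
          hence "S = {a} \<or> S = {b} \<or> S = {a, b}" by auto
          thus "finprod G (\<lambda>x. x) S \<noteq> \<one>" using a b a1 b1 ab1 by auto
        qed (use True a b in auto)
        thus ?thesis using b1 by auto
      next
        case False
        then obtain c where c: "c \<in> carrier G" "c \<notin> generate G {a, b}"
          using generate_incl[of "{a, b}"] a b by blast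
        have cb: "c \<noteq> a" "c \<noteq> b" using c by (auto intro: generate.incl)
        let ?B = "{a, b, c}"
        have Bc: "?B \<subseteq> carrier G" "finite ?B" using a b c by auto
        have cardB: "card ?B = 3" using b1 cb by auto
        have S: "generate G ?B \<subseteq> T" using TG Bc by (simp add: generate_incl)
        have "card (generate G ?B) \<le> (card ?B choose 2) + card ?B + 1"
          by (rule count_bound[OF inj Bc(2) Bc(1) S]) simp
        hence le7: "card (generate G ?B) \<le> 7" using cardB by (simp add: choose_two)
        have "8 \<le> card (generate G ?B)"
          by (rule card8[OF a(1) b(1) c(1) a1 b(2) c(2)]) (use Gb_card[OF Bc(2) Bc(1)] in auto)
        thus ?thesis using le7 by simp
      qed
    qed
  qed
qed

lemma ev_W: "Tword w \<Longrightarrow> ev w \<in> carrier (W_group G T)"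
proof (induction w)
  case Nil then show ?case unfolding carrW by (simp add: generate.one)
next
  case (Cons p w)
  have "hgen (fst p) = W_gen G (fst p)" using Cons.prems by (simp add: hgen_def)
  hence "ev (p # w) = W_gen G (fst p) \<otimes>\<^bsub>BG\<^esub> ev w" by (simp add: ev_Cons)
  moreover have "W_gen G (fst p) \<in> generate BG (W_gen G ` T)" using Cons.prems by (intro generate.incl) simp
  ultimately show ?case using Cons unfolding carrW by (simp add: generate.eng)
qed

lemma U_elem: "x \<in> carrier (U_group G T) \<Longrightarrow> \<exists>a. x = word_class T R a \<and> Tword a"
  by (auto simp: U_group_def presented_group_def Tword_iff)

lemma some_class: assumes "Tword a"
  shows "Tword (SOME a'. a' \<in> word_class T R a) \<and> pres_eq R a (SOME a'. a' \<in> word_class T R a)"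
proof -
  have "a \<in> word_class T R a" using assms by (simp add: word_class_def Tword_iff pres_eq.refl)
  hence "(SOME a'. a' \<in> word_class T R a) \<in> word_class T R a" by (rule someI)
  thus ?thesis by (simp add: word_class_def Tword_iff)
qed

lemma phi_hom: "phi_map G T \<in> hom (U_group G T) (W_group G T)"
proof (rule homI)
  fix x assume "x \<in> carrier (U_group G T)"
  then obtain a where a: "x = word_class T R a" "Tword a" using U_elem by blast
  show "phi_map G T x \<in> carrier (W_group G T)" using a by (simp add: phi_class ev_W)
next
  fix x y assume x: "x \<in> carrier (U_group G T)" and y: "y \<in> carrier (U_group G T)"
  obtain a where a: "x = word_class T R a" "Tword a" using U_elem x by blast
  obtain b where b: "y = word_class T R b" "Tword b" using U_elem y by blast
  let ?a = "SOME a'. a' \<in> x" and ?b = "SOME b'. b' \<in> y"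
  have a2: "Tword ?a" "pres_eq R a ?a" using some_class[OF a(2)] a(1) by auto
  have b2: "Tword ?b" "pres_eq R b ?b" using some_class[OF b(2)] b(1) by auto
  have "x \<otimes>\<^bsub>U_group G T\<^esub> y = word_class T R (?a @ ?b)"
    by (simp add: U_group_def presented_group_def)
  hence "phi_map G T (x \<otimes>\<^bsub>U_group G T\<^esub> y) = ev (?a @ ?b)" using a2 b2 by (simp add: phi_class)
  also have "\<dots> = ev a \<otimes>\<^bsub>BG\<^esub> ev b" using ev_pres[OF a2(2)] ev_pres[OF b2(2)] by (simp add: ev_append)
  also have "\<dots> = phi_map G T x \<otimes>\<^bsub>W_group G T\<^esub> phi_map G T y"
    using a b by (simp add: phi_class W_group_def)
  finally show "phi_map G T (x \<otimes>\<^bsub>U_group G T\<^esub> y) = phi_map G T x \<otimes>\<^bsub>W_group G T\<^esub> phi_map G T y" .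
qed

lemma W_ev: "z \<in> carrier (W_group G T) \<Longrightarrow> \<exists>w. Tword w \<and> z = ev w"
  unfolding carrW
proof (induction rule: generate.induct)
  case one then show ?case by (metis Tword_Nil ev_Nil)
next
  case (incl h)
  then obtain t where t: "t \<in> T" "h = W_gen G t" by auto
  have wc: "W_gen G t \<in> carrier BG" using t T_sub by auto
  have "ev [(t, False)] = W_gen G t"
    using t monoid.r_one[OF group.is_monoid[OF BG_group] wc] by (simp add: ev_Cons hgen_def)
  thus ?case using t by (metis Tword_Cons Tword_Nil fst_conv)
next
  case (inv h)
  then obtain t where t: "t \<in> T" "h = W_gen G t" by auto
  have wc: "W_gen G t \<in> carrier BG" using t T_sub by auto
  have "ev [(t, False)] = W_gen G t"
    using t monoid.r_one[OF group.is_monoid[OF BG_group] wc] by (simp add: ev_Cons hgen_def)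
  moreover have "inv\<^bsub>BG\<^esub> h = W_gen G t" using t T_sub inv_BG_Wgen by auto
  ultimately show ?case using t by (metis Tword_Cons Tword_Nil fst_conv)
next
  case (eng h1 h2)
  then obtain u v where "Tword u" "h1 = ev u" "Tword v" "h2 = ev v" by blast
  thus ?case by (metis Tword_append ev_append)
qed

lemma iso_of_inj: assumes inj: "inj_on (phi_map G T) (carrier (U_group G T))"
  shows "phi_map G T \<in> iso (U_group G T) (W_group G T)"
proof -
  have "phi_map G T ` carrier (U_group G T) = carrier (W_group G T)"
  proof
    show "phi_map G T ` carrier (U_group G T) \<subseteq> carrier (W_group G T)"
      using phi_hom by (auto simp: hom_def)
  next
    show "carrier (W_group G T) \<subseteq> phi_map G T ` carrier (U_group G T)"
    proof
      fix z assume "z \<in> carrier (W_group G T)"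
      then obtain w where w: "Tword w" "z = ev w" using W_ev by blast
      hence "z = phi_map G T (word_class T R w)" by (simp add: phi_class)
      thus "z \<in> phi_map G T ` carrier (U_group G T)" using class_carr[OF w(1)] by blast
    qed
  qed
  thus ?thesis using inj phi_hom by (simp add: iso_def bij_betw_def)
qed

end

locale ea2ab = ea2 G for G :: "('g, 'b) monoid_scheme" (structure) +
  fixes a b :: 'g
  assumes a_c: "a \<in> carrier G" and b_c: "b \<in> carrier G"
    and a1: "a \<noteq> \<one>" and b1: "b \<noteq> \<one>" and ab: "a \<noteq> b" and ab1: "a \<otimes> b \<noteq> \<one>"
    and carrG: "carrier G = {\<one>, a, b, a \<otimes> b}"
begin

lemma dist: "a \<noteq> \<one>" "\<one> \<noteq> a" "b \<noteq> \<one>" "\<one> \<noteq> b" "a \<noteq> b" "b \<noteq> a"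
   "a \<otimes> b \<noteq> \<one>" "\<one> \<noteq> a \<otimes> b" "a \<otimes> b \<noteq> a" "a \<noteq> a \<otimes> b" "a \<otimes> b \<noteq> b" "b \<noteq> a \<otimes> b"
proof -
  have x: "a \<otimes> b \<noteq> a"
  proof assume "a \<otimes> b = a" hence "a \<otimes> (a \<otimes> b) = \<one>" using a_c by simp
    thus False using a_c b_c b1 by simp qed
  have y: "a \<otimes> b \<noteq> b"
  proof assume "a \<otimes> b = b" hence "a \<otimes> b \<otimes> b = \<one>" using b_c by simp
    thus False using a_c b_c a1 by (simp add: m_assoc) qed
  show "a \<noteq> \<one>" "\<one> \<noteq> a" "b \<noteq> \<one>" "\<one> \<noteq> b" "a \<noteq> b" "b \<noteq> a"
   "a \<otimes> b \<noteq> \<one>" "\<one> \<noteq> a \<otimes> b" "a \<otimes> b \<noteq> a" "a \<noteq> a \<otimes> b" "a \<otimes> b \<noteq> b" "b \<noteq> a \<otimes> b"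
    using a1 b1 ab ab1 x y by auto
qed

lemma tab: "a \<otimes> a = \<one>" "b \<otimes> b = \<one>" "b \<otimes> a = a \<otimes> b" "a \<otimes> (a \<otimes> b) = b" "(a \<otimes> b) \<otimes> a = b"
  "b \<otimes> (a \<otimes> b) = a" "(a \<otimes> b) \<otimes> b = a" "(a \<otimes> b) \<otimes> (a \<otimes> b) = \<one>"
  "\<one> \<otimes> a = a" "\<one> \<otimes> b = b" "\<one> \<otimes> (a \<otimes> b) = a \<otimes> b" "\<one> \<otimes> \<one> = \<one>"
  "a \<otimes> \<one> = a" "b \<otimes> \<one> = b" "(a \<otimes> b) \<otimes> \<one> = a \<otimes> b"
proof -
  have c: "a \<otimes> b \<in> carrier G" using a_c b_c by simp
  show "a \<otimes> a = \<one>" "b \<otimes> b = \<one>" "(a \<otimes> b) \<otimes> (a \<otimes> b) = \<one>" using a_c b_c c by simp_all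
  show "b \<otimes> a = a \<otimes> b" using a_c b_c by (simp add: m_comm)
  show "a \<otimes> (a \<otimes> b) = b" using a_c b_c by simp
  show "(a \<otimes> b) \<otimes> a = b" using a_c b_c by (simp add: m_comm)
  show "b \<otimes> (a \<otimes> b) = a" using a_c b_c by (simp add: m_lcomm)
  show "(a \<otimes> b) \<otimes> b = a" using a_c b_c by (simp add: m_assoc)
  show "\<one> \<otimes> a = a" "\<one> \<otimes> b = b" "\<one> \<otimes> (a \<otimes> b) = a \<otimes> b" "\<one> \<otimes> \<one> = \<one>"
    "a \<otimes> \<one> = a" "b \<otimes> \<one> = b" "(a \<otimes> b) \<otimes> \<one> = a \<otimes> b" using a_c b_c c by simp_all
qed

definition co1 :: "'g \<Rightarrow> bool" where "co1 x \<longleftrightarrow> x = a \<or> x = a \<otimes> b"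
definition co2 :: "'g \<Rightarrow> bool" where "co2 x \<longleftrightarrow> x = b \<or> x = a \<otimes> b"

lemma elemG: "x \<in> carrier G \<Longrightarrow> x = \<one> \<or> x = a \<or> x = b \<or> x = a \<otimes> b"
  using carrG by auto

lemma co1_mult: "x \<in> carrier G \<Longrightarrow> y \<in> carrier G \<Longrightarrow> co1 (x \<otimes> y) = (co1 x \<noteq> co1 y)"
  by (elim elemG[elim_format] disjE) (simp_all add: co1_def tab dist)

lemma co2_mult: "x \<in> carrier G \<Longrightarrow> y \<in> carrier G \<Longrightarrow> co2 (x \<otimes> y) = (co2 x \<noteq> co2 y)"
  by (elim elemG[elim_format] disjE) (simp_all add: co2_def tab dist)

definition beta :: "'g \<Rightarrow> 'g \<Rightarrow> bool" where
  "beta x y \<longleftrightarrow> (co1 x \<and> co2 y) \<noteq> (co2 x \<and> co1 y)"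

lemma beta1: "x \<in> carrier G \<Longrightarrow> y \<in> carrier G \<Longrightarrow> beta (x \<otimes> y) z = (beta x z \<noteq> beta y z)"
  unfolding beta_def using co1_mult co2_mult by auto
lemma beta2: "x \<in> carrier G \<Longrightarrow> y \<in> carrier G \<Longrightarrow> beta z (x \<otimes> y) = (beta z x \<noteq> beta z y)"
  unfolding beta_def using co1_mult co2_mult by auto
lemma beta3: "\<not> beta x x"
  unfolding beta_def by auto

definition Phi :: "('g \<times> 'g \<Rightarrow>\<^sub>0 int) \<Rightarrow> int" where
  "Phi c = Poly_Mapping.lookup (frag_extend (\<lambda>k. if beta (fst k) (snd k) then frag_of () else 0) c) ()"

lemma Phi_add: "Phi (c + d) = Phi c + Phi d"
  by (simp add: Phi_def frag_extend_add lookup_add)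
lemma Phi_diff: "Phi (c - d) = Phi c - Phi d"
  by (simp add: Phi_def frag_extend_diff lookup_minus)
lemma Phi_minus: "Phi (- c) = - Phi c"
  by (simp add: Phi_def frag_extend_minus)
lemma Phi_frag: "Phi (frag_of (x, y)) = (if beta x y then 1 else 0)"
  by (simp add: Phi_def)
lemma Phi_zero: "Phi 0 = 0"
  by (simp add: Phi_def)

lemma Phi_rel: "r \<in> wedge_relators G \<Longrightarrow> even (Phi r)"
  unfolding wedge_relators_def
proof (elim UnE CollectE exE conjE)
  fix x y z assume r: "r = frag_of (x \<otimes> y, z) - frag_of (x, z) - frag_of (y, z)"
    and c: "x \<in> carrier G" "y \<in> carrier G" "z \<in> carrier G"
  show "even (Phi r)" using beta1[OF c(1,2), of z] unfolding r by (simp add: Phi_diff Phi_frag)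
next
  fix x y z assume r: "r = frag_of (x, y \<otimes> z) - frag_of (x, y) - frag_of (x, z)"
    and c: "x \<in> carrier G" "y \<in> carrier G" "z \<in> carrier G"
  show "even (Phi r)" using beta2[OF c(2,3), of x] unfolding r by (simp add: Phi_diff Phi_frag)
next
  fix x assume r: "r = frag_of (x, x)"
  show "even (Phi r)" unfolding r by (simp add: Phi_frag beta3)
qed

lemma Phi_HH: "c \<in> HH \<Longrightarrow> even (Phi c)"
proof (induction rule: generate.induct)
  case one then show ?case by (simp add: Phi_zero)
next
  case (incl h) then show ?case by (rule Phi_rel)
next
  case (inv h)
  have "inv\<^bsub>F\<^esub> h = - h" using inv rel_sub by auto
  thus ?case using Phi_rel[OF inv] by (simp add: Phi_minus)
next
  case (eng h1 h2) then show ?case by (simp add: Phi_add)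
qed

end

locale ea2Tab = ea2T G T + ea2ab G a b for G :: "('g, 'b) monoid_scheme" (structure) and T a b
begin

definition e4 :: "('g \<times> bool) list" where
  "e4 = [(\<one>, False), (a, False), (b, False), (a \<otimes> b, False)]"

lemma lc_e4: "lc e4 = frag_of (a \<otimes> b, \<one>) + frag_of (b, a \<otimes> b) + frag_of (a, a) + frag_of (\<one>, \<one>)"
  by (simp add: e4_def tab a_c b_c)

lemma Phi_e4: "Phi (lc e4) = 1"
  unfolding lc_e4 by (simp add: Phi_add Phi_frag beta_def co1_def co2_def dist)

lemma par_e4: "par e4 = {\<one>, a, b, a \<otimes> b}"
proof -
  have "e4 = map (\<lambda>x. (x, False)) [\<one>, a, b, a \<otimes> b]" by (simp add: e4_def)
  moreover have "distinct [\<one>, a, b, a \<otimes> b]" using dist by auto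
  ultimately show ?thesis unfolding par_def using cnt_map_distinct by auto
qed

lemma test1: assumes "P \<subseteq> {\<one>, a, b, a \<otimes> b}" "finprod G (\<lambda>x. x) P = \<one>" "even (card P)"
  shows "P = {} \<or> P = {\<one>, a, b, a \<otimes> b}"
proof -
  have "P \<in> Pow {\<one>, a, b, a \<otimes> b}" using assms by simp
  hence "P \<in> {{}, {\<one>}, {a}, {b}, {a \<otimes> b}, {\<one>, a}, {\<one>, b}, {\<one>, a \<otimes> b}, {a, b}, {a, a \<otimes> b}, {b, a \<otimes> b},
     {\<one>, a, b}, {\<one>, a, a \<otimes> b}, {\<one>, b, a \<otimes> b}, {a, b, a \<otimes> b}, {\<one>, a, b, a \<otimes> b}}"
    by (simp add: Pow_insert insert_commute)
  thus ?thesis using assms(2,3) a_c b_c by (auto simp: dist tab)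
qed

lemma K2: assumes TG: "T = carrier G" and w: "Tword w" and e: "ev w = \<one>\<^bsub>BG\<^esub>"
  shows "par w = {}"
proof -
  have ef: "cl (lc w) = cl 0" "gp w = \<one>" "((-1::int) ^ length w) = 1"
    using e ev_form[OF w] by (simp_all add: BG_one)
  let ?P = "par w"
  have P: "?P \<subseteq> {\<one>, a, b, a \<otimes> b}" using par_T[OF w] TG carrG by simp
  have fp: "finprod G (\<lambda>x. x) ?P = \<one>" using ef gp_par[OF w] by simp
  have ev2: "even (card ?P)" using ef(3) sign_par[of w] by (simp add: minus_one_power_iff split: if_splits)
  show ?thesis
  proof (cases "?P = {}")
    case True then show ?thesis .
  next
    case False
    hence Pf: "?P = {\<one>, a, b, a \<otimes> b}" using test1[OF P fp ev2] by simp
    have we4: "Tword e4" unfolding e4_def Tword_def using TG a_c b_c by auto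
    have "par w = par e4" by (simp only: Pf par_e4)
    hence "pres_eq R w e4" by (rule par_eq_pres[OF w we4])
    hence "ev w = ev e4" by (rule ev_pres)
    hence "fst (ev w) = fst (ev e4)" by simp
    hence "cl (lc w) = cl (lc e4)" unfolding ev_form[OF w] ev_form[OF we4] by simp
    hence "cl (lc e4) = cl 0" using ef(1) by simp
    hence "lc e4 \<in> HH" using we4 by (simp add: cl_eq)
    hence "even (Phi (lc e4))" by (rule Phi_HH)
    thus ?thesis using Phi_e4 by simp
  qed
qed

end

context ea2T
begin

lemma part3b: assumes TG: "T = carrier G" and dim: "f2_dim G n" and n2: "n \<le> 2"
  shows "phi_map G T \<in> iso (U_group G T) (W_group G T)"
proof -
  obtain B where B: "f2_basis G B" "finite B" "card B = n" using dim by (auto simp: f2_dim_def)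
  have Bc: "B \<subseteq> carrier G" "generate G B = carrier G" using B by (auto simp: f2_basis_def f2_independent_def)
  have ind: "finprod G (\<lambda>x. x) S \<noteq> \<one>" if "S \<subseteq> B" "S \<noteq> {}" for S
  proof -
    have "finite S" using that B(2) by (rule_tac finite_subset) auto
    thus ?thesis using B(1) that unfolding f2_basis_def f2_independent_def by blast
  qed
  have sqB: "x \<otimes> x = \<one>" if "x \<in> B" for x using that Bc(1) by auto
  have sub: "carrier G \<subseteq> (\<lambda>S. finprod G (\<lambda>x. x) S) ` Pow B"
    using elem_gen_sub[OF cg Bc(1) B(2) sqB] Bc(2) by simp
  have "n = 0 \<or> n = 1 \<or> n = 2" using n2 by auto
  moreover
  { assume n0: "n = 0"
    hence B0: "B = {}" using B by simp
    have "carrier G \<subseteq> {\<one>}" using sub B0 by simp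
    hence "T - {\<one>} = B" using TG B0 by auto
    hence ?thesis using part1 B(1) iso_of_inj by simp }
  moreover
  { assume n1: "n = 1"
    have "\<exists>x. B = {x}" using B(3) n1 card_1_singleton_iff[of B] by simp
    then obtain x where x: "B = {x}" by blast
    have xc: "x \<in> carrier G" using x Bc by simp
    have x1: "x \<noteq> \<one>" using ind[of "{x}"] x xc by simp
    have "carrier G \<subseteq> {\<one>, x}"
    proof
      fix z assume "z \<in> carrier G"
      then obtain S where S: "S \<subseteq> {x}" "z = finprod G (\<lambda>x. x) S" using sub x by blast
      have "S = {} \<or> S = {x}" using S(1) by blast
      thus "z \<in> {\<one>, x}" using S(2) xc by auto
    qed
    hence "T - {\<one>} = B" using TG x xc x1 by auto
    hence ?thesis using part1 B(1) iso_of_inj by simp }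
  moreover
  { assume n2: "n = 2"
    have "\<exists>x y. B = {x, y} \<and> x \<noteq> y" using B(3) n2 card_2_iff[of B] by simp
    then obtain x y where xy: "B = {x, y}" "x \<noteq> y" by blast
    have xc: "x \<in> carrier G" "y \<in> carrier G" using xy Bc by auto
    have x1: "x \<noteq> \<one>" using ind[of "{x}"] xy xc by simp
    have y1: "y \<noteq> \<one>" using ind[of "{y}"] xy xc by simp
    have "finprod G (\<lambda>x. x) {x, y} = x \<otimes> y" using xc xy by simp
    hence xy1: "x \<otimes> y \<noteq> \<one>" using ind[of "{x, y}"] xy by simp
    have "carrier G \<subseteq> {\<one>, x, y, x \<otimes> y}"
    proof
      fix z assume "z \<in> carrier G"
      then obtain S where S: "S \<subseteq> {x, y}" "z = finprod G (\<lambda>x. x) S" using sub xy by blast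
      have "S \<in> Pow {x, y}" using S(1) by simp
      hence "S \<in> {{}, {x}, {y}, {x, y}}" by (simp add: Pow_insert insert_commute)
      hence "S = {} \<or> S = {x} \<or> S = {y} \<or> S = {x, y}" by simp
      thus "z \<in> {\<one>, x, y, x \<otimes> y}" using S(2) xc xy by auto
    qed
    moreover have "{\<one>, x, y, x \<otimes> y} \<subseteq> carrier G" using xc by auto
    ultimately have cG: "carrier G = {\<one>, x, y, x \<otimes> y}" by blast
    have ax: "ea2ab_axioms G x y" unfolding ea2ab_axioms_def
      using xc x1 y1 xy(2) xy1 cG by (intro conjI) assumption+
    interpret X: ea2Tab G T x y
      by (rule ea2Tab.intro[OF ea2T_axioms ea2ab.intro[OF ea2_axioms ax]])
    have "inj_on (phi_map G T) (carrier (U_group G T))"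
      by (rule inj_core) (rule X.K2[OF TG])
    hence ?thesis by (rule iso_of_inj) }
  ultimately show ?thesis by blast
qed

end

theorem corollary4p5:
  fixes G :: "('g, 'b) monoid_scheme" and T :: "'g set"
  assumes "elem_abelian_2group G"
    and "T \<subseteq> carrier G"
    and "generate G T = carrier G"
    and "\<one>\<^bsub>G\<^esub> \<in> T"
  shows "(f2_basis G (T - {\<one>\<^bsub>G\<^esub>}) \<longrightarrow> inj_on (phi_map G T) (carrier (U_group G T)))
    \<and> (\<forall>n. f2_dim G n \<and> real (card (T - {\<one>\<^bsub>G\<^esub>})) > real n * (real n + 1) / 2
           \<longrightarrow> \<not> inj_on (phi_map G T) (carrier (U_group G T)))
    \<and> (T = carrier G \<longrightarrow>
         (phi_map G T \<in> iso (U_group G T) (W_group G T) \<longleftrightarrow> (\<exists>n. f2_dim G n \<and> n \<le> 2)))"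
proof -
  have e: "ea2 G" by (rule ea2.intro[OF assms(1)])
  have et: "ea2T G T" by (rule ea2T.intro[OF e]) (simp add: ea2T_axioms_def assms(2))
  show ?thesis
  proof (intro conjI impI allI)
    assume "f2_basis G (T - {\<one>\<^bsub>G\<^esub>})"
    thus "inj_on (phi_map G T) (carrier (U_group G T))" by (rule ea2T.part1[OF et])
  next
    fix n assume "f2_dim G n \<and> real (card (T - {\<one>\<^bsub>G\<^esub>})) > real n * (real n + 1) / 2"
    thus "\<not> inj_on (phi_map G T) (carrier (U_group G T))"
      using ea2T.part2[OF et assms(4)] by blast
  next
    assume TG: "T = carrier G"
    show "phi_map G T \<in> iso (U_group G T) (W_group G T) \<longleftrightarrow> (\<exists>n. f2_dim G n \<and> n \<le> 2)"
    proof
      assume "phi_map G T \<in> iso (U_group G T) (W_group G T)"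
      thus "\<exists>n. f2_dim G n \<and> n \<le> 2" using ea2T.part3a[OF et TG] ea2T.iso_inj[OF et] by blast
    next
      assume "\<exists>n. f2_dim G n \<and> n \<le> 2"
      thus "phi_map G T \<in> iso (U_group G T) (W_group G T)" using ea2T.part3b[OF et TG] by blast
    qed
  qed
qed

end
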